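(* Let $n\ge 3$ and let $(\alpha,\beta)$ satisfy $\beta\ge 0$, $0<\alpha+\beta<n-\beta$ and $\frac{n-\alpha-2\beta}{2n}+\frac{n-\alpha}{2(n-1)}<1$. Let $1\le s\le t\le\infty$. Then, with constants depending only on $n,\alpha,\beta,s,t$: (i) If $1+\frac1t<\frac{n-\alpha}{n-1}+\frac1s$, then for all $f\in L^s(\mathbb R^{n-1})$ and $x_n>0$, $\|E_{\alpha,\beta}(f)(\cdot,x_n)\|_{L^t(\mathbb R^{n-1})}\lesssim x_n^{(n-1)(1+\frac1t-\frac1s)-(n-\alpha-\beta)}\|f\|_{L^s(\mathbb R^{n-1})}$. (ii) If $f\in L^1(\mathbb R^{n-1})$ with $\mathrm{supp}(f)\subset B_R(0)$, then for all $x=(x',x_n)\in\mathbb R^n_+$, $|E_{\alpha,\beta}(f)(x)|\lesssim \frac{x_n^\beta}{(((|x'|-R)^+)^2+x_n^2)^{\frac{n-\alpha}{2}}}\|f\|_{L^1(\mathbb R^{n-1})}$. (iii) If $f\in L^s(\mathbb R^{n-1})$ with $\mathrm{supp}(f)\subset \mathbb R^{n-1}\setminus B_R(0)$ and $\frac1s>\frac{\alpha-1}{n-1}$, then for all $x_n>0$, $\|E_{\alpha,\beta}(f)(\cdot,x_n)\|_{L^\infty(B_{R/2})}\lesssim x_n^\beta R^{(\alpha-1)-\frac{n-1}{s}}\|f\|_{L^s(\mathbb R^{n-1})}$; and if moreover $\frac1s>\frac{\alpha+\beta-1}{n-1}$, then $\|E_{\alpha,\beta}(f)\|_{L^\infty(B^+_{R/2})}\lesssim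 R^{\alpha+\beta-1-\frac{n-1}{s}}\|f\|_{L^s(\mathbb R^{n-1})}$.
   Context: $\mathbb R^n_+=\{(x',x_n):x'\in\mathbb R^{n-1},x_n>0\}$. For $f$ on $\mathbb R^{n-1}$, $E_{\alpha,\beta}(f)(x',x_n)=\int_{\mathbb R^{n-1}}\frac{x_n^\beta f(y')}{(x_n^2+|x'-y'|^2)^{\frac{n-\alpha}{2}}}\,\mathrm dy'$. $B_R=\{x'\in\mathbb R^{n-1}:|x'|<R\}$ and $B^+_R=\{(x',x_n)\in\mathbb R^n_+:\sqrt{|x'|^2+x_n^2}<R\}$. $(a)^+=\max\{a,0\}$. $A\lesssim B$ means $A\le CB$ for a constant $C$ independent of $f$, $R$ and $x$. *)

theory Defs
  imports "HOL-Analysis.Analysis" "HOL-Probability.Essential_Supremum"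
begin

definition recip :: "ereal \<Rightarrow> real" where
  "recip p = (if p = \<infinity> then 0 else 1 / real_of_ereal p)"

text \<open>The L^p norm of f with respect to the measure M (p in [1,\<infinity>]), valued in [0,\<infinity>].
  It is \<infinity> when f is not M-measurable; thus finiteness means membership in L^p(M).\<close>
definition Lp_norm :: "ereal \<Rightarrow> 'a measure \<Rightarrow> ('a \<Rightarrow> real) \<Rightarrow> ennreal" where
  "Lp_norm p M f =
     (if f \<notin> borel_measurable M then \<infinity>
      else if p = \<infinity> then e2ennreal (esssup M (\<lambda>x. ereal \<bar>f x\<bar>))
      else (let I = (\<integral>\<^sup>+ x. ennreal (\<bar>f x\<bar> powr real_of_ereal p) \<partial>M)
            in if I = \<infinity> then \<infinity> else ennreal (enn2real I powr (1 / real_of_ereal p))))"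

text \<open>The extension operator E_{\<alpha>,\<beta>}; the boundary space R^{n-1} is the euclidean space 'a
  (n = DIM('a) + 1), a point of the upper half space is (x', x_n).\<close>
definition E_op :: "real \<Rightarrow> real \<Rightarrow> ('a::euclidean_space \<Rightarrow> real) \<Rightarrow> 'a \<times> real \<Rightarrow> real" where
  "E_op \<alpha> \<beta> f = (\<lambda>(x', xn). \<integral>y. xn powr \<beta> * f y /
       (xn\<^sup>2 + (norm (x' - y))\<^sup>2) powr ((real DIM('a) + 1 - \<alpha>) / 2) \<partial>lebesgue)"

definition half_ball :: "real \<Rightarrow> ('a::euclidean_space \<times> real) set" where
  "half_ball R = {(x', xn). xn > 0 \<and> sqrt ((norm x')\<^sup>2 + xn\<^sup>2) < R}"

end

theory Submission
  imports Defs
begin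

lemma leb_borel_id: "(\<lambda>x. x) \<in> (lebesgue :: 'a::euclidean_space measure) \<rightarrow>\<^sub>M borel"
  by (rule measurable_completion) simp
lemma leb_borel[measurable (raw)]: "f \<in> M \<rightarrow>\<^sub>M (lebesgue :: 'a::euclidean_space measure) \<Longrightarrow> f \<in> M \<rightarrow>\<^sub>M borel"
  using measurable_comp[OF _ leb_borel_id] by (simp add: comp_def)
lemma leb_fst[measurable (raw)]: "f \<in> M \<rightarrow>\<^sub>M (lebesgue :: ('a::euclidean_space \<times> 'b::euclidean_space) measure) \<Longrightarrow> (\<lambda>x. fst (f x)) \<in> M \<rightarrow>\<^sub>M borel"
  by (rule measurable_compose[OF leb_borel[of f]]) (auto intro!: borel_measurable_continuous_onI continuous_intros)
lemma leb_snd[measurable (raw)]: "f \<in> M \<rightarrow>\<^sub>M (lebesgue :: ('a::euclidean_space \<times> 'b::euclidean_space) measure) \<Longrightarrow> (\<lambda>x. snd (f x)) \<in> M \<rightarrow>\<^sub>M borel"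
  by (rule measurable_compose[OF leb_borel[of f]]) (auto intro!: borel_measurable_continuous_onI continuous_intros)

lemma sf_leb: "sigma_finite_measure (lebesgue :: 'a::euclidean_space measure)"
proof -
  obtain A :: "'a set set" where "countable A" "A \<subseteq> sets lborel" "\<Union>A = space lborel" "\<forall>a\<in>A. emeasure lborel a \<noteq> \<infinity>"
    using sigma_finite_measure.sigma_finite_countable[OF sigma_finite_lborel] by blast
  then show ?thesis
    by (intro sigma_finite_measure.intro exI[of _ A]) auto
qed

lemma psf_leb: "pair_sigma_finite (lebesgue :: 'a::euclidean_space measure) (lebesgue :: 'b::euclidean_space measure)"
  by (simp add: pair_sigma_finite_def sf_leb)

lemma nn_integral_lebesgue_affine:
  fixes f :: "'a::euclidean_space \<Rightarrow> ennreal" and c :: real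
  assumes f[measurable]: "f \<in> borel_measurable lebesgue" and c: "c \<noteq> 0"
  shows "(\<integral>\<^sup>+x. f x \<partial>lebesgue) = ennreal (\<bar>c\<bar> ^ DIM('a)) * (\<integral>\<^sup>+x. f (t + c *\<^sub>R x) \<partial>lebesgue)"
proof -
  have T: "(\<lambda>x. t + (\<Sum>j\<in>Basis. (c * (x \<bullet> j)) *\<^sub>R j)) = (\<lambda>x::'a. t + c *\<^sub>R x)"
    unfolding scaleR_scaleR[symmetric] scaleR_sum_right[symmetric]
    by (auto simp add: euclidean_representation)
  have eq: "lebesgue = density (distr lebesgue lebesgue (\<lambda>x::'a. t + c *\<^sub>R x)) (\<lambda>_. ennreal (\<bar>c\<bar> ^ DIM('a)))"
    using lebesgue_affine_euclidean[of "\<lambda>_. c" t] c by (simp add: T)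
  have m: "(\<lambda>x::'a. t + c *\<^sub>R x) \<in> lebesgue \<rightarrow>\<^sub>M lebesgue"
    using lebesgue_affine_measurable[of "\<lambda>_. c" t] c by (simp add: T)
  have "(\<integral>\<^sup>+x. f x \<partial>lebesgue) = (\<integral>\<^sup>+x. f x \<partial>density (distr lebesgue lebesgue (\<lambda>x::'a. t + c *\<^sub>R x)) (\<lambda>_. ennreal (\<bar>c\<bar> ^ DIM('a))))"
    using eq by simp
  also have "\<dots> = \<integral>\<^sup>+ x. ennreal (\<bar>c\<bar> ^ DIM('a)) * f x \<partial>distr lebesgue lebesgue (\<lambda>x. t + c *\<^sub>R x)"
    by (subst nn_integral_density) auto
  also have "\<dots> = ennreal (\<bar>c\<bar> ^ DIM('a)) * integral\<^sup>N (distr lebesgue lebesgue (\<lambda>x. t + c *\<^sub>R x)) f"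
    using f measurable_distr_eq1 nn_integral_cmult by blast
  also have "\<dots> = ennreal (\<bar>c\<bar> ^ DIM('a)) * (\<integral>\<^sup>+x. f (t + c *\<^sub>R x) \<partial>lebesgue)"
    using m by (subst nn_integral_distr) auto
  finally show ?thesis .
qed

lemma nn_integral_lebesgue_translate:
  fixes f :: "'a::euclidean_space \<Rightarrow> ennreal"
  assumes f[measurable]: "f \<in> borel_measurable lebesgue"
  shows "(\<integral>\<^sup>+x. f (x - y) \<partial>lebesgue) = (\<integral>\<^sup>+x. f x \<partial>lebesgue)"
  using nn_integral_lebesgue_affine[OF f, of 1 "- y"] by (simp add: algebra_simps)

lemma nn_integral_lebesgue_translate':
  fixes f :: "'a::euclidean_space \<Rightarrow> ennreal"
  assumes f[measurable]: "f \<in> borel_measurable lebesgue"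
  shows "(\<integral>\<^sup>+x. f (y - x) \<partial>lebesgue) = (\<integral>\<^sup>+x. f x \<partial>lebesgue)"
  using nn_integral_lebesgue_affine[OF f, of "-1" y] by (simp add: algebra_simps)

lemma powr_inv_cancel: "0 \<le> (x::real) \<Longrightarrow> r \<noteq> 0 \<Longrightarrow> (x powr r) powr (1/r) = x"
  by (cases "x = 0") (auto simp: powr_powr)
lemma powr_div_cancel: "0 \<le> (x::real) \<Longrightarrow> 0 < G \<Longrightarrow> r \<noteq> 0 \<Longrightarrow> (x powr r / G) powr (1/r) = x / G powr (1/r)"
  by (subst powr_divide) (auto simp: powr_inv_cancel)

lemma Lp_norm_inf: "f \<in> borel_measurable M \<Longrightarrow> Lp_norm \<infinity> M f = e2ennreal (esssup M (\<lambda>x. ereal \<bar>f x\<bar>))"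
  by (simp add: Lp_norm_def)

lemma amgm2:
  fixes X Y a b :: real
  assumes "X \<ge> 0" "Y \<ge> 0" "a \<ge> 0" "b \<ge> 0" "a + b = 1"
  shows "X powr a * Y powr b \<le> a * X + b * Y"
proof (cases "X = 0 \<or> Y = 0")
  case True then show ?thesis using assms by auto
next
  case False then show ?thesis using Youngs_inequality_0[of a b X Y] assms by auto
qed

lemma amgm3:
  fixes X Y Z \<theta> a b :: real
  assumes "X \<ge> 0" "Y \<ge> 0" "Z \<ge> 0" "\<theta> \<ge> 0" "a \<ge> 0" "b \<ge> 0" "\<theta> + a + b = 1"
  shows "X powr \<theta> * Y powr a * Z powr b \<le> \<theta> * X + a * Y + b * Z"
proof (cases "X = 0 \<or> Y = 0 \<or> Z = 0")
  case True then show ?thesis using assms by auto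
next
  case False
  then have pos: "X > 0" "Y > 0" "Z > 0" using assms by auto
  show ?thesis
  proof (cases "a + b = 0")
    case True
    then have "a = 0" "b = 0" "\<theta> = 1" using assms by auto
    then show ?thesis using pos by simp
  next
    case False
    then have ab: "a + b > 0" using assms by auto
    define m where "m = Y powr (a/(a+b)) * Z powr (b/(a+b))"
    have mpos: "m > 0" using pos by (simp add: m_def)
    have "m powr (a+b) = Y powr a * Z powr b"
      unfolding m_def using pos ab by (simp add: powr_mult powr_powr)
    then have "X powr \<theta> * Y powr a * Z powr b = X powr \<theta> * m powr (a+b)" by simp
    also have "\<dots> \<le> \<theta> * X + (a+b) * m"
      using amgm2[of X m \<theta> "a+b"] assms mpos by auto
    also have "m \<le> (a/(a+b)) * Y + (b/(a+b)) * Z"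
      unfolding m_def using amgm2[of Y Z "a/(a+b)" "b/(a+b)"] assms ab
      by (simp add: add_divide_distrib[symmetric])
    then have "(a+b) * m \<le> (a+b) * ((a/(a+b)) * Y + (b/(a+b)) * Z)"
      using ab by (intro mult_left_mono) auto
    also have "\<dots> = ((a+b) * (a/(a+b))) * Y + ((a+b) * (b/(a+b))) * Z" by (simp add: algebra_simps)
    also have "\<dots> = a * Y + b * Z" using ab by simp
    finally show ?thesis by (simp add: add.assoc)
  qed
qed

lemma nn_integral_lin_bound:
  fixes h A B :: "'a \<Rightarrow> real"
  assumes [measurable]: "A \<in> borel_measurable M" "B \<in> borel_measurable M"
    and "\<And>x. h x \<le> k1 * A x + k2 * B x" "\<And>x. A x \<ge> 0" "\<And>x. B x \<ge> 0" "k1 \<ge> 0" "k2 \<ge> 0"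
  shows "(\<integral>\<^sup>+x. ennreal (h x) \<partial>M) \<le> ennreal k1 * (\<integral>\<^sup>+x. ennreal (A x) \<partial>M) + ennreal k2 * (\<integral>\<^sup>+x. ennreal (B x) \<partial>M)"
proof -
  have "(\<integral>\<^sup>+x. ennreal (h x) \<partial>M) \<le> (\<integral>\<^sup>+x. ennreal k1 * ennreal (A x) + ennreal k2 * ennreal (B x) \<partial>M)"
  proof (intro nn_integral_mono)
    fix x
    have "ennreal (h x) \<le> ennreal (k1 * A x + k2 * B x)" using assms(3) by (rule ennreal_leI)
    also have "\<dots> = ennreal k1 * ennreal (A x) + ennreal k2 * ennreal (B x)"
      using assms(4)[of x] assms(5)[of x] assms(6,7) by (simp add: ennreal_plus ennreal_mult)
    finally show "ennreal (h x) \<le> ennreal k1 * ennreal (A x) + ennreal k2 * ennreal (B x)" .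
  qed
  also have "\<dots> = ennreal k1 * (\<integral>\<^sup>+x. ennreal (A x) \<partial>M) + ennreal k2 * (\<integral>\<^sup>+x. ennreal (B x) \<partial>M)"
    by (simp add: nn_integral_add nn_integral_cmult)
  finally show ?thesis .
qed

lemma Lp_norm_fin:
  fixes f :: "'a \<Rightarrow> real"
  assumes "f \<in> borel_measurable M" "(\<integral>\<^sup>+x. ennreal (\<bar>f x\<bar> powr p) \<partial>M) = ennreal D" "D \<ge> 0"
  shows "Lp_norm (ereal p) M f = ennreal (D powr (1/p))"
  using assms by (simp add: Lp_norm_def Let_def)

lemma Lp_norm_infD:
  fixes f :: "'a \<Rightarrow> real"
  assumes "f \<in> borel_measurable M" "(\<integral>\<^sup>+x. ennreal (\<bar>f x\<bar> powr p) \<partial>M) = \<infinity>"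
  shows "Lp_norm (ereal p) M f = \<infinity>"
  using assms by (simp add: Lp_norm_def Let_def)

lemma AE_zero_of_int0:
  fixes g :: "'a \<Rightarrow> real"
  assumes [measurable]: "g \<in> borel_measurable M" and "(\<integral>\<^sup>+x. ennreal (\<bar>g x\<bar> powr p) \<partial>M) \<le> 0"
  shows "AE x in M. g x = 0"
proof -
  have "(\<integral>\<^sup>+x. ennreal (\<bar>g x\<bar> powr p) \<partial>M) = 0" using assms(2) by simp
  then have "AE x in M. ennreal (\<bar>g x\<bar> powr p) = 0" by (subst (asm) nn_integral_0_iff_AE) auto
  then show ?thesis by eventually_elim auto
qed

lemma holder_one:
  fixes f g :: "'a \<Rightarrow> real"
  assumes [measurable]: "f \<in> borel_measurable M"
    and g: "\<And>x. g x \<le> G" "\<And>x. g x \<ge> 0"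
  shows "(\<integral>\<^sup>+x. ennreal (g x * \<bar>f x\<bar>) \<partial>M) \<le> ennreal G * Lp_norm 1 M f"
proof -
  have G0: "G \<ge> 0" using g[of undefined] by simp
  have "(\<integral>\<^sup>+x. ennreal (g x * \<bar>f x\<bar>) \<partial>M) \<le> (\<integral>\<^sup>+x. ennreal G * ennreal \<bar>f x\<bar> \<partial>M)"
    using g G0 by (intro nn_integral_mono) (subst ennreal_mult[symmetric], auto intro!: ennreal_leI mult_right_mono)
  also have "\<dots> = ennreal G * (\<integral>\<^sup>+x. ennreal \<bar>f x\<bar> \<partial>M)" by (simp add: nn_integral_cmult)
  also have "(\<integral>\<^sup>+x. ennreal \<bar>f x\<bar> \<partial>M) \<le> Lp_norm 1 M f"
  proof (cases "(\<integral>\<^sup>+x. ennreal \<bar>f x\<bar> \<partial>M) = \<infinity>")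
    case True then show ?thesis by (simp add: Lp_norm_def one_ereal_def)
  next
    case False then show ?thesis
      by (simp add: Lp_norm_def one_ereal_def Let_def less_top[symmetric])
  qed
  finally show ?thesis by (simp add: mult_left_mono)
qed

lemma holder_inf:
  fixes f g :: "'a \<Rightarrow> real"
  assumes [measurable]: "f \<in> borel_measurable M" "g \<in> borel_measurable M"
    and g: "(\<integral>\<^sup>+x. ennreal (g x) \<partial>M) \<le> ennreal G" "\<And>x. g x \<ge> 0"
  shows "(\<integral>\<^sup>+x. ennreal (g x * \<bar>f x\<bar>) \<partial>M) \<le> ennreal G * Lp_norm \<infinity> M f"
proof -
  let ?S = "e2ennreal (esssup M (\<lambda>x. ereal \<bar>f x\<bar>))"
  have "AE x in M. ereal \<bar>f x\<bar> \<le> esssup M (\<lambda>x. ereal \<bar>f x\<bar>)" by (rule esssup_AE)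
  then have "AE x in M. ennreal \<bar>f x\<bar> \<le> ?S"
    by eventually_elim (metis e2ennreal_ereal e2ennreal_mono)
  then have "(\<integral>\<^sup>+x. ennreal (g x * \<bar>f x\<bar>) \<partial>M) \<le> (\<integral>\<^sup>+x. ennreal (g x) * ?S \<partial>M)"
    using g by (intro nn_integral_mono_AE) (auto elim!: eventually_mono simp: ennreal_mult mult_left_mono)
  also have "\<dots> = (\<integral>\<^sup>+x. ennreal (g x) \<partial>M) * ?S" by (simp add: nn_integral_multc)
  also have "\<dots> \<le> ennreal G * ?S" by (rule mult_right_mono[OF g(1)]) simp
  finally show ?thesis by (simp only: Lp_norm_inf[OF assms(1)])
qed

lemma holder_fin:
  fixes f g :: "'a \<Rightarrow> real"
  assumes pq: "p > 1" "q > 1" "1/p + 1/q = 1"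
    and [measurable]: "g \<in> borel_measurable M" "f \<in> borel_measurable M"
    and g0: "\<And>x. g x \<ge> 0"
    and G: "(\<integral>\<^sup>+x. ennreal (g x powr q) \<partial>M) \<le> ennreal G" "G \<ge> 0"
  shows "(\<integral>\<^sup>+x. ennreal (g x * \<bar>f x\<bar>) \<partial>M) \<le> ennreal (G powr (1/q)) * Lp_norm (ereal p) M f"
proof (cases "G = 0")
  case True
  then have "AE x in M. g x = 0" using AE_zero_of_int0[of g M q] G g0 by simp
  then have "(\<integral>\<^sup>+x. ennreal (g x * \<bar>f x\<bar>) \<partial>M) = 0"
    by (subst nn_integral_0_iff_AE) (auto elim: eventually_mono)
  then show ?thesis by simp
next
  case Gpos: False
  then have Gp: "G > 0" using G by simp
  show ?thesis
  proof (cases "(\<integral>\<^sup>+x. ennreal (\<bar>f x\<bar> powr p) \<partial>M) = \<infinity>")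
    case True
    then have "Lp_norm (ereal p) M f = \<infinity>" by (simp add: Lp_norm_infD)
    then show ?thesis using Gp by (simp add: ennreal_mult_top)
  next
    case False
    then obtain D where D: "(\<integral>\<^sup>+x. ennreal (\<bar>f x\<bar> powr p) \<partial>M) = ennreal D" "D \<ge> 0"
      using ennreal_cases[of "(\<integral>\<^sup>+x. ennreal (\<bar>f x\<bar> powr p) \<partial>M)"] by auto
    have L: "Lp_norm (ereal p) M f = ennreal (D powr (1/p))" using Lp_norm_fin[OF _ D(1) D(2)] by simp
    show ?thesis
    proof (cases "D = 0")
      case True
      then have "AE x in M. f x = 0" using AE_zero_of_int0[of f M p] D by simp
      then have "(\<integral>\<^sup>+x. ennreal (g x * \<bar>f x\<bar>) \<partial>M) = 0"
        by (subst nn_integral_0_iff_AE) (auto elim: eventually_mono)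
      then show ?thesis by simp
    next
      case False
      then have Dp: "D > 0" using D by simp
      define c where "c = G powr (1/q) * D powr (1/p)"
      have cp: "c > 0" using Gp Dp by (simp add: c_def)
      have pt: "g x * \<bar>f x\<bar> \<le> (c / (q * G)) * (g x powr q) + (c / (p * D)) * (\<bar>f x\<bar> powr p)" for x
      proof -
        have "(g x powr q / G) powr (1/q) * (\<bar>f x\<bar> powr p / D) powr (1/p) \<le> (1/q) * (g x powr q / G) + (1/p) * (\<bar>f x\<bar> powr p / D)"
          using amgm2[of "g x powr q / G" "\<bar>f x\<bar> powr p / D" "1/q" "1/p"] pq Gp Dp by auto
        moreover have "(g x powr q / G) powr (1/q) * (\<bar>f x\<bar> powr p / D) powr (1/p) = g x * \<bar>f x\<bar> / c"
          using pq Gp Dp g0[of x] powr_div_cancel[of "g x" G q] powr_div_cancel[of "\<bar>f x\<bar>" D p] by (simp add: c_def)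
        ultimately have "g x * \<bar>f x\<bar> / c \<le> (1/q) * (g x powr q / G) + (1/p) * (\<bar>f x\<bar> powr p / D)" by simp
        then have "g x * \<bar>f x\<bar> \<le> c * ((1/q) * (g x powr q / G) + (1/p) * (\<bar>f x\<bar> powr p / D))"
          using cp by (simp add: divide_le_eq mult.commute)
        then show ?thesis by (simp add: field_simps)
      qed
      have m1: "(\<lambda>x. g x powr q) \<in> borel_measurable M" by measurable
      have m2: "(\<lambda>x. \<bar>f x\<bar> powr p) \<in> borel_measurable M" by measurable
      have k1: "c / (q * G) \<ge> 0" and k2: "c / (p * D) \<ge> 0" using cp Gp Dp pq by auto
      have "(\<integral>\<^sup>+x. ennreal (g x * \<bar>f x\<bar>) \<partial>M) \<le> ennreal (c / (q * G)) * (\<integral>\<^sup>+x. ennreal (g x powr q) \<partial>M) + ennreal (c / (p * D)) * (\<integral>\<^sup>+x. ennreal (\<bar>f x\<bar> powr p) \<partial>M)"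
        by (rule nn_integral_lin_bound[OF m1 m2 pt _ _ k1 k2]) simp_all
      also have "\<dots> \<le> ennreal (c / (q * G)) * ennreal G + ennreal (c / (p * D)) * ennreal D"
        using G(1) D(1) by (intro add_mono mult_left_mono) auto
      also have "\<dots> = ennreal (c / (q * G) * G + c / (p * D) * D)"
      proof -
        have e1: "ennreal (c/(q*G)) * ennreal G = ennreal (c/(q*G)*G)" by (rule ennreal_mult[symmetric]) (use k1 Gp in auto)
        have e2: "ennreal (c/(p*D)) * ennreal D = ennreal (c/(p*D)*D)" by (rule ennreal_mult[symmetric]) (use k2 Dp in auto)
        show ?thesis unfolding e1 e2 by (rule ennreal_plus[symmetric]) (use k1 k2 Gp Dp cp pq in auto)
      qed
      also have "c / (q * G) * G + c / (p * D) * D = c * (1/p + 1/q)"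
        using Gp Dp pq by (simp add: field_simps)
      also have "\<dots> = c" using pq by simp
      also have "ennreal c = ennreal (G powr (1/q)) * ennreal (D powr (1/p))"
        unfolding c_def by (rule ennreal_mult) auto
      finally show ?thesis using L by simp
    qed
  qed
qed

lemma nn_integral_lin_bound3:
  fixes h A B E :: "'a \<Rightarrow> real"
  assumes [measurable]: "A \<in> borel_measurable M" "B \<in> borel_measurable M" "E \<in> borel_measurable M"
    and le: "\<And>x. h x \<le> k1 * A x + k2 * B x + k3 * E x"
    and A0: "\<And>x. A x \<ge> 0" and B0: "\<And>x. B x \<ge> 0" and E0: "\<And>x. E x \<ge> 0"
    and k: "k1 \<ge> 0" "k2 \<ge> 0" "k3 \<ge> 0"
  shows "(\<integral>\<^sup>+x. ennreal (h x) \<partial>M) \<le> ennreal k1 * (\<integral>\<^sup>+x. ennreal (A x) \<partial>M) + ennreal k2 * (\<integral>\<^sup>+x. ennreal (B x) \<partial>M) + ennreal k3 * (\<integral>\<^sup>+x. ennreal (E x) \<partial>M)"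
proof -
  have "(\<integral>\<^sup>+x. ennreal (h x) \<partial>M) \<le> (\<integral>\<^sup>+x. ennreal k1 * ennreal (A x) + ennreal k2 * ennreal (B x) + ennreal k3 * ennreal (E x) \<partial>M)"
  proof (intro nn_integral_mono)
    fix x
    have "ennreal (h x) \<le> ennreal (k1 * A x + k2 * B x + k3 * E x)" using le by (rule ennreal_leI)
    also have "\<dots> = ennreal k1 * ennreal (A x) + ennreal k2 * ennreal (B x) + ennreal k3 * ennreal (E x)"
      using A0[of x] B0[of x] E0[of x] k by (simp add: ennreal_plus ennreal_mult)
    finally show "ennreal (h x) \<le> ennreal k1 * ennreal (A x) + ennreal k2 * ennreal (B x) + ennreal k3 * ennreal (E x)" .
  qed
  also have "\<dots> = ennreal k1 * (\<integral>\<^sup>+x. ennreal (A x) \<partial>M) + ennreal k2 * (\<integral>\<^sup>+x. ennreal (B x) \<partial>M) + ennreal k3 * (\<integral>\<^sup>+x. ennreal (E x) \<partial>M)"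
    by (simp add: nn_integral_add nn_integral_cmult)
  finally show ?thesis .
qed

lemma young3:
  fixes u v :: "'a \<Rightarrow> real"
  assumes w: "\<theta> > 0" "a \<ge> 0" "b \<ge> 0" "\<theta> + a + b = 1"
    and [measurable]: "u \<in> borel_measurable M" "v \<in> borel_measurable M"
    and u0: "\<And>x. u x \<ge> 0" and v0: "\<And>x. v x \<ge> 0"
    and A: "(\<integral>\<^sup>+x. ennreal (u x * v x) \<partial>M) = ennreal Ar" "Ar > 0"
    and B: "(\<integral>\<^sup>+x. ennreal (u x) \<partial>M) \<le> ennreal Br" "Br > 0"
    and D: "(\<integral>\<^sup>+x. ennreal (v x) \<partial>M) \<le> ennreal Dr" "Dr > 0"
  shows "(\<integral>\<^sup>+x. ennreal ((u x * v x) powr \<theta> * u x powr a * v x powr b) \<partial>M) \<le> ennreal (Ar powr \<theta> * Br powr a * Dr powr b)"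
proof -
  define c where "c = Ar powr \<theta> * Br powr a * Dr powr b"
  have cp: "c > 0" using A B D by (simp add: c_def)
  have pt: "(u x * v x) powr \<theta> * u x powr a * v x powr b \<le> (c * \<theta> / Ar) * (u x * v x) + (c * a / Br) * u x + (c * b / Dr) * v x" for x
  proof -
    have uv: "u x * v x \<ge> 0" using u0[of x] v0[of x] by simp
    have "(u x * v x / Ar) powr \<theta> * (u x / Br) powr a * (v x / Dr) powr b \<le> \<theta> * (u x * v x / Ar) + a * (u x / Br) + b * (v x / Dr)"
      using amgm3[of "u x * v x / Ar" "u x / Br" "v x / Dr" \<theta> a b] w A B D u0[of x] v0[of x] by auto
    moreover have "(u x * v x / Ar) powr \<theta> * (u x / Br) powr a * (v x / Dr) powr b = (u x * v x) powr \<theta> * u x powr a * v x powr b / c"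
      using A B D u0[of x] v0[of x] uv by (simp add: powr_divide c_def)
    ultimately have "(u x * v x) powr \<theta> * u x powr a * v x powr b / c \<le> \<theta> * (u x * v x / Ar) + a * (u x / Br) + b * (v x / Dr)" by simp
    then have "(u x * v x) powr \<theta> * u x powr a * v x powr b \<le> c * (\<theta> * (u x * v x / Ar) + a * (u x / Br) + b * (v x / Dr))"
      using cp by (simp add: divide_le_eq mult.commute)
    then show ?thesis by (simp add: field_simps)
  qed
  have m1: "(\<lambda>x. u x * v x) \<in> borel_measurable M" by measurable
  have k: "c * \<theta> / Ar \<ge> 0" "c * a / Br \<ge> 0" "c * b / Dr \<ge> 0" using cp w A B D by auto
  have "(\<integral>\<^sup>+x. ennreal ((u x * v x) powr \<theta> * u x powr a * v x powr b) \<partial>M) \<le> ennreal (c * \<theta> / Ar) * (\<integral>\<^sup>+x. ennreal (u x * v x) \<partial>M) + ennreal (c * a / Br) * (\<integral>\<^sup>+x. ennreal (u x) \<partial>M) + ennreal (c * b / Dr) * (\<integral>\<^sup>+x. ennreal (v x) \<partial>M)"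
    by (rule nn_integral_lin_bound3[OF m1 _ _ pt _ _ _ k]) (use u0 v0 in auto)
  also have "\<dots> \<le> ennreal (c * \<theta> / Ar) * ennreal Ar + ennreal (c * a / Br) * ennreal Br + ennreal (c * b / Dr) * ennreal Dr"
    using A(1) B(1) D(1) by (intro add_mono mult_left_mono) auto
  also have "\<dots> = ennreal (c * \<theta> / Ar * Ar) + ennreal (c * a / Br * Br) + ennreal (c * b / Dr * Dr)"
    using k A B D by (simp only: ennreal_mult[symmetric] less_imp_le)
  also have "\<dots> = ennreal (c * \<theta>) + ennreal (c * a) + ennreal (c * b)" using A B D by simp
  also have "\<dots> = ennreal (c * \<theta> + c * a + c * b)" using cp w by (simp add: ennreal_plus)
  also have "c * \<theta> + c * a + c * b = c" using w by (simp add: distrib_left[symmetric])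
  finally show ?thesis by (simp add: c_def)
qed

lemma dyadic_ex: fixes r :: real assumes "r \<ge> 1" shows "\<exists>k::nat. 2 ^ k \<le> r \<and> r < 2 ^ (k + 1)"
proof -
  define L where "L = log 2 r"
  have L0: "L \<ge> 0" using assms by (simp add: L_def)
  define k where "k = nat \<lfloor>L\<rfloor>"
  have kL: "real k \<le> L" "L < real k + 1" using L0 by (auto simp: k_def)
  have r: "r = 2 powr L" using assms by (simp add: L_def)
  have "(2::real) ^ k = 2 powr real k" by (simp add: powr_realpow)
  also have "\<dots> \<le> 2 powr L" using kL by simp
  finally have 1: "2 ^ k \<le> r" using r by simp
  have "r < 2 powr (real k + 1)" using r kL by simp
  also have "2 powr (real k + 1) = 2 ^ (k + 1)" by (simp add: powr_realpow[symmetric] powr_add)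
  finally show ?thesis using 1 by blast
qed

lemma emeasure_ball_finite: "emeasure (lebesgue :: 'a::euclidean_space measure) (ball 0 r) < \<infinity>"
proof -
  have "emeasure lborel (ball (0::'a) r) < \<infinity>" by (rule emeasure_bounded_finite) simp
  then show ?thesis by simp
qed

lemma tail_finite:
  fixes b :: real
  assumes b: "b > real DIM('a::euclidean_space)"
  shows "(\<integral>\<^sup>+ y. indicator {y::'a. 1 \<le> norm y} y * ennreal (norm y powr (-b)) \<partial>lebesgue) < \<infinity>"
proof -
  let ?d = "DIM('a)"
  define h :: "'a \<Rightarrow> ennreal" where "h y = indicator {y. 1 \<le> norm y \<and> norm y < 2} y * ennreal (norm y powr (-b))" for y
  have hm[measurable]: "h \<in> borel_measurable lebesgue" unfolding h_def by measurable
  have b0: "b > 0" using b by (smt (verit) of_nat_0_le_iff)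
  have hle: "h y \<le> indicator (ball 0 2) y" for y
  proof (cases "1 \<le> norm y \<and> norm y < 2")
    case True
    have "1 \<le> norm y powr b" using True b0 ge_one_powr_ge_zero[of "norm y" b] by simp
    then have "norm y powr (-b) \<le> 1" by (simp add: powr_minus inverse_le_1_iff)
    then show ?thesis using True by (simp add: h_def indicator_def)
  qed (auto simp: h_def)
  have H: "(\<integral>\<^sup>+ y. h y \<partial>lebesgue) < \<infinity>"
  proof -
    have "(\<integral>\<^sup>+ y. h y \<partial>lebesgue) \<le> (\<integral>\<^sup>+ y. indicator (ball (0::'a) 2) y \<partial>lebesgue)"
      by (rule nn_integral_mono) (simp add: hle)
    also have "\<dots> = emeasure lebesgue (ball (0::'a) 2)" by simp
    finally show ?thesis using emeasure_ball_finite[of 2, where 'a='a] by (metis emeasure_completion leI less_le_trans linorder_not_less  sets_lborel top.not_eq_extremum emeasure_lborel_ball_finite)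
  qed
  define \<rho> where "\<rho> = (2::real) powr (real ?d - b)"
  have \<rho>: "\<rho> > 0" "\<rho> < 1" using b powr_less_mono[of "real ?d - b" 0 2] by (auto simp: \<rho>_def)
  define t :: "nat \<Rightarrow> 'a \<Rightarrow> ennreal" where "t k y = ennreal (2 powr (- b * real k)) * h ((1 / 2 ^ k) *\<^sub>R y)" for k y
  have tm[measurable]: "t k \<in> borel_measurable lebesgue" for k unfolding t_def by measurable
  have pt: "indicator {y::'a. 1 \<le> norm y} y * ennreal (norm y powr (-b)) \<le> (\<Sum>k. t k y)" for y
  proof (cases "1 \<le> norm y")
    case True
    then obtain k :: nat where k: "2 ^ k \<le> norm y" "norm y < 2 ^ (k + 1)" using dyadic_ex by blast
    have n: "norm ((1 / 2 ^ k) *\<^sub>R y) = norm y / 2 ^ k" by simp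
    have "1 \<le> norm y / 2 ^ k" "norm y / 2 ^ k < 2" using k by (auto simp: field_simps)
    then have "t k y = ennreal (2 powr (- b * real k)) * ennreal ((norm y / 2 ^ k) powr (-b))"
      by (simp add: t_def h_def n indicator_def)
    also have "2 powr (- b * real k) * (norm y / 2 ^ k) powr (-b) = norm y powr (-b)"
    proof -
      have "(norm y / 2 ^ k) powr (-b) = norm y powr (-b) / (2 ^ k) powr (-b)"
        by (rule powr_divide)
      also have "(2 ^ k) powr (-b) = (2::real) powr (- b * real k)"
        by (simp add: powr_realpow[symmetric] powr_powr mult.commute)
      finally show ?thesis by simp
    qed
    then have "ennreal (2 powr (- b * real k)) * ennreal ((norm y / 2 ^ k) powr (-b)) = ennreal (norm y powr (-b))"
      by (simp add: ennreal_mult[symmetric])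
    finally have "t k y = ennreal (norm y powr (-b))" .
    moreover have "t k y \<le> (\<Sum>k. t k y)"
      using sum_le_suminf[of "\<lambda>k. t k y" "{k}"] by (simp add: summableI)
    ultimately show ?thesis using True by simp
  qed simp
  have scale: "(\<integral>\<^sup>+ y. h ((1 / 2 ^ k) *\<^sub>R y) \<partial>lebesgue) = ennreal (2 ^ (k * ?d)) * (\<integral>\<^sup>+ y. h y \<partial>lebesgue)" for k
  proof -
    have "(\<integral>\<^sup>+ y. h y \<partial>lebesgue) = ennreal (\<bar>1 / 2 ^ k\<bar> ^ ?d) * (\<integral>\<^sup>+ y. h (0 + (1 / 2 ^ k) *\<^sub>R y) \<partial>lebesgue)"
      by (rule nn_integral_lebesgue_affine) auto
    then have "ennreal (2 ^ (k * ?d)) * (\<integral>\<^sup>+ y. h y \<partial>lebesgue) = ennreal (2 ^ (k * ?d)) * ennreal ((1 / 2 ^ k) ^ ?d) * (\<integral>\<^sup>+ y. h ((1 / 2 ^ k) *\<^sub>R y) \<partial>lebesgue)"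
      by (simp add: mult.assoc)
    also have "ennreal (2 ^ (k * ?d)) * ennreal ((1 / 2 ^ k) ^ ?d) = 1"
      by (simp add: ennreal_mult[symmetric] power_mult power_one_over)
    finally show ?thesis by simp
  qed
  have "(\<integral>\<^sup>+ y. indicator {y::'a. 1 \<le> norm y} y * ennreal (norm y powr (-b)) \<partial>lebesgue) \<le> (\<integral>\<^sup>+ y. (\<Sum>k. t k y) \<partial>lebesgue)"
    by (intro nn_integral_mono pt)
  also have "\<dots> = (\<Sum>k. (\<integral>\<^sup>+ y. t k y \<partial>lebesgue))" by (rule nn_integral_suminf) simp
  also have "\<dots> = (\<Sum>k. ennreal (\<rho> ^ k) * (\<integral>\<^sup>+ y. h y \<partial>lebesgue))"
  proof (intro suminf_cong)
    fix k
    have "(\<integral>\<^sup>+ y. t k y \<partial>lebesgue) = ennreal (2 powr (- b * real k)) * (\<integral>\<^sup>+ y. h ((1 / 2 ^ k) *\<^sub>R y) \<partial>lebesgue)"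
      unfolding t_def by (rule nn_integral_cmult) simp
    also have "\<dots> = ennreal (2 powr (- b * real k)) * ennreal (2 ^ (k * ?d)) * (\<integral>\<^sup>+ y. h y \<partial>lebesgue)"
      by (simp add: scale mult.assoc)
    also have "ennreal (2 powr (- b * real k)) * ennreal (2 ^ (k * ?d)) = ennreal (\<rho> ^ k)"
    proof -
      have "(2::real) ^ (k * ?d) = 2 powr (real k * real ?d)" by (simp add: powr_realpow[symmetric])
      then have "2 powr (- b * real k) * 2 ^ (k * ?d) = (2::real) powr (real k * (real ?d - b))"
        by (simp add: powr_add[symmetric] algebra_simps)
      also have "\<dots> = \<rho> ^ k" by (simp add: \<rho>_def powr_realpow[symmetric] powr_powr mult.commute)
      finally show ?thesis by (simp add: ennreal_mult[symmetric])
    qed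
    finally show "(\<integral>\<^sup>+ y. t k y \<partial>lebesgue) = ennreal (\<rho> ^ k) * (\<integral>\<^sup>+ y. h y \<partial>lebesgue)" .
  qed
  also have "\<dots> = (\<Sum>k. ennreal (\<rho> ^ k)) * (\<integral>\<^sup>+ y. h y \<partial>lebesgue)" by (rule ennreal_suminf_multc)
  also have "(\<Sum>k. ennreal (\<rho> ^ k)) = ennreal (1 / (1 - \<rho>))"
    by (rule suminf_ennreal_eq) (use \<rho> geometric_sums[of \<rho>] in auto)
  finally show ?thesis using H by (simp add: ennreal_mult_less_top order_le_less_trans)
qed

lemma tail_scaled:
  fixes b R :: real
  assumes R: "R > 0"
  shows "(\<integral>\<^sup>+ y. indicator {y::'a::euclidean_space. R \<le> norm y} y * ennreal (norm y powr (-b)) \<partial>lebesgue)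
       = ennreal (R powr (real DIM('a) - b)) * (\<integral>\<^sup>+ y. indicator {y::'a. 1 \<le> norm y} y * ennreal (norm y powr (-b)) \<partial>lebesgue)"
proof -
  let ?d = "DIM('a)"
  have "(\<integral>\<^sup>+ y. indicator {y::'a. R \<le> norm y} y * ennreal (norm y powr (-b)) \<partial>lebesgue)
      = ennreal (\<bar>R\<bar> ^ ?d) * (\<integral>\<^sup>+ y. indicator {y::'a. R \<le> norm y} (0 + R *\<^sub>R y) * ennreal (norm (0 + R *\<^sub>R y) powr (-b)) \<partial>lebesgue)"
    by (rule nn_integral_lebesgue_affine) (use R in auto)
  also have "(\<integral>\<^sup>+ y. indicator {y::'a. R \<le> norm y} (0 + R *\<^sub>R y) * ennreal (norm (0 + R *\<^sub>R y) powr (-b)) \<partial>lebesgue)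
     = (\<integral>\<^sup>+ y. ennreal (R powr (-b)) * (indicator {y::'a. 1 \<le> norm y} y * ennreal (norm y powr (-b))) \<partial>lebesgue)"
  proof (rule nn_integral_cong)
    fix y :: 'a
    have i: "indicator {y::'a. R \<le> norm y} (0 + R *\<^sub>R y) = (indicator {y::'a. 1 \<le> norm y} y :: ennreal)"
      using R by (simp add: indicator_def abs_of_pos)
    have "norm (0 + R *\<^sub>R y) powr (-b) = R powr (-b) * norm y powr (-b)"
      using R by (simp add: abs_of_pos powr_mult)
    then show "indicator {y::'a. R \<le> norm y} (0 + R *\<^sub>R y) * ennreal (norm (0 + R *\<^sub>R y) powr (-b))
      = ennreal (R powr (-b)) * (indicator {y::'a. 1 \<le> norm y} y * ennreal (norm y powr (-b)))"
      unfolding i by (simp add: ennreal_mult mult_ac)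
  qed
  also have "\<dots> = ennreal (R powr (-b)) * (\<integral>\<^sup>+ y. indicator {y::'a. 1 \<le> norm y} y * ennreal (norm y powr (-b)) \<partial>lebesgue)"
    by (rule nn_integral_cmult) measurable
  also have "ennreal (\<bar>R\<bar> ^ ?d) * (ennreal (R powr (-b)) * (\<integral>\<^sup>+ y. indicator {y::'a. 1 \<le> norm y} y * ennreal (norm y powr (-b)) \<partial>lebesgue))
     = ennreal (\<bar>R\<bar> ^ ?d * R powr (-b)) * (\<integral>\<^sup>+ y. indicator {y::'a. 1 \<le> norm y} y * ennreal (norm y powr (-b)) \<partial>lebesgue)"
    using R by (simp add: ennreal_mult mult.assoc)
  also have "\<bar>R\<bar> ^ ?d * R powr (-b) = R powr (real ?d - b)"
    using R by (simp add: powr_realpow[symmetric] powr_add[symmetric] powr_diff powr_minus divide_inverse)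
  finally show ?thesis .
qed

lemma bump_finite:
  fixes e :: real
  assumes e: "2 * e > real DIM('a::euclidean_space)"
  shows "(\<integral>\<^sup>+ w. ennreal ((1 + (norm (w::'a))\<^sup>2) powr (-e)) \<partial>lebesgue) < \<infinity>"
proof -
  have e0: "e > 0" using e by (smt (verit) of_nat_0_le_iff)
  have pt: "ennreal ((1 + (norm w)\<^sup>2) powr (-e)) \<le> indicator (ball (0::'a) 1) w + indicator {y::'a. 1 \<le> norm y} w * ennreal (norm w powr (-(2*e)))" for w :: 'a
  proof (cases "1 \<le> norm w")
    case True
    have "(1 + (norm w)\<^sup>2) powr (-e) \<le> ((norm w)\<^sup>2) powr (-e)"
      by (rule powr_mono2') (use e0 True in auto)
    also have "((norm w)\<^sup>2) powr (-e) = norm w powr (-(2*e))"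
    proof -
      have a: "(norm w)\<^sup>2 = norm w powr 2" using True by (simp add: powr_numeral)
      show ?thesis unfolding a powr_powr by simp
    qed
    finally show ?thesis using True by (simp add: indicator_def ennreal_leI)
  next
    case False
    have "(1 + (norm w)\<^sup>2) powr (-e) \<le> 1"
      using e0 by (simp add: powr_minus inverse_le_1_iff ge_one_powr_ge_zero)
    then show ?thesis using False by (simp add: indicator_def)
  qed
  have "(\<integral>\<^sup>+ w. ennreal ((1 + (norm (w::'a))\<^sup>2) powr (-e)) \<partial>lebesgue) \<le> (\<integral>\<^sup>+ w. indicator (ball (0::'a) 1) w + indicator {y::'a. 1 \<le> norm y} w * ennreal (norm w powr (-(2*e))) \<partial>lebesgue)"
    by (rule nn_integral_mono) (rule pt)
  also have "\<dots> = emeasure lebesgue (ball (0::'a) 1) + (\<integral>\<^sup>+ w. indicator {y::'a. 1 \<le> norm y} w * ennreal (norm w powr (-(2*e))) \<partial>lebesgue)"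
  proof (subst nn_integral_add)
    have "ball (0::'a) 1 \<in> sets lebesgue" by (intro sets_completionI_sets) simp
    then show "indicator (ball (0::'a) 1) \<in> borel_measurable lebesgue" by (rule borel_measurable_indicator)
  qed auto
  also have "\<dots> < \<infinity>"
    using emeasure_ball_finite[of 1, where 'a='a] tail_finite[of "2*e", where 'a='a] e
    by (simp add: emeasure_lborel_ball_finite)
  finally show ?thesis .
qed

definition kern :: "real \<Rightarrow> real \<Rightarrow> real \<Rightarrow> 'a::euclidean_space \<Rightarrow> real" where
  "kern \<beta> c xn z = xn powr \<beta> / (xn\<^sup>2 + (norm z)\<^sup>2) powr c"

lemma kern_pos: "xn > 0 \<Longrightarrow> kern \<beta> c xn z > 0"
  by (simp add: kern_def)

lemma kern_meas[measurable]: "kern \<beta> c xn \<in> borel_measurable lebesgue"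
  unfolding kern_def by measurable

lemma kern_scale:
  assumes xn: "xn > 0" and q: "q > 0"
  shows "kern \<beta> c xn (xn *\<^sub>R w) powr q = xn powr (q * (\<beta> - 2 * c)) * (1 + (norm w)\<^sup>2) powr (-(c * q))"
proof -
  define P where "P = 1 + (norm w)\<^sup>2"
  have P: "P > 0" unfolding P_def by (simp add: add_pos_nonneg)
  have s1: "xn\<^sup>2 + (norm (xn *\<^sub>R w))\<^sup>2 = xn\<^sup>2 * P"
    using xn by (simp add: power_mult_distrib P_def algebra_simps)
  have s3: "(xn\<^sup>2) powr c = xn powr (2 * c)"
  proof -
    have "xn\<^sup>2 = xn powr 2" using xn by (simp add: powr_numeral)
    then show ?thesis by (simp only: powr_powr)
  qed
  have s2: "(xn\<^sup>2 * P) powr c = xn powr (2 * c) * P powr c"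
    using xn P by (simp only: powr_mult zero_le_power2 less_imp_le s3)
  have s4: "kern \<beta> c xn (xn *\<^sub>R w) = xn powr (\<beta> - 2 * c) * P powr (-c)"
    unfolding kern_def s1 s2 by (simp only: powr_diff powr_minus divide_inverse inverse_mult_distrib mult.assoc)
  have "kern \<beta> c xn (xn *\<^sub>R w) powr q = (xn powr (\<beta> - 2 * c)) powr q * (P powr (-c)) powr q"
    unfolding s4 by (rule powr_mult; simp)
  also have "\<dots> = xn powr (q * (\<beta> - 2 * c)) * P powr (-(c * q))"
    by (simp add: powr_powr mult.commute)
  finally show ?thesis by (simp add: P_def)
qed

lemma kern_int:
  fixes x :: "'a::euclidean_space"
  assumes xn: "xn > 0" and q: "q > 0"
  shows "(\<integral>\<^sup>+ y. ennreal (kern \<beta> c xn (x - y) powr q) \<partial>lebesgue)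
       = ennreal (xn powr (real DIM('a) + q * (\<beta> - 2 * c))) * (\<integral>\<^sup>+ w. ennreal ((1 + (norm (w::'a))\<^sup>2) powr (-(c * q))) \<partial>lebesgue)"
proof -
  let ?F = "\<lambda>z::'a. ennreal (kern \<beta> c xn z powr q)"
  have Fm[measurable]: "?F \<in> borel_measurable lebesgue" by measurable
  have "(\<integral>\<^sup>+ y. ?F (x - y) \<partial>lebesgue) = (\<integral>\<^sup>+ y. ?F y \<partial>lebesgue)"
    by (rule nn_integral_lebesgue_translate'[OF Fm])
  also have "\<dots> = ennreal (\<bar>xn\<bar> ^ DIM('a)) * (\<integral>\<^sup>+ w. ?F (0 + xn *\<^sub>R w) \<partial>lebesgue)"
    by (rule nn_integral_lebesgue_affine) (use xn in auto)
  also have "(\<integral>\<^sup>+ w. ?F (0 + xn *\<^sub>R w) \<partial>lebesgue) = (\<integral>\<^sup>+ w. ennreal (xn powr (q * (\<beta> - 2 * c))) * ennreal ((1 + (norm (w::'a))\<^sup>2) powr (-(c * q))) \<partial>lebesgue)"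
    using xn q by (simp add: kern_scale ennreal_mult)
  also have "\<dots> = ennreal (xn powr (q * (\<beta> - 2 * c))) * (\<integral>\<^sup>+ w. ennreal ((1 + (norm (w::'a))\<^sup>2) powr (-(c * q))) \<partial>lebesgue)"
    by (rule nn_integral_cmult) measurable
  also have "ennreal (\<bar>xn\<bar> ^ DIM('a)) * (ennreal (xn powr (q * (\<beta> - 2 * c))) * (\<integral>\<^sup>+ w. ennreal ((1 + (norm (w::'a))\<^sup>2) powr (-(c * q))) \<partial>lebesgue))
     = ennreal (\<bar>xn\<bar> ^ DIM('a) * xn powr (q * (\<beta> - 2 * c))) * (\<integral>\<^sup>+ w. ennreal ((1 + (norm (w::'a))\<^sup>2) powr (-(c * q))) \<partial>lebesgue)"
    by (simp add: ennreal_mult mult.assoc)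
  also have "\<bar>xn\<bar> ^ DIM('a) * xn powr (q * (\<beta> - 2 * c)) = xn powr (real DIM('a) + q * (\<beta> - 2 * c))"
    using xn by (simp add: powr_realpow[symmetric] powr_add)
  finally show ?thesis .
qed

lemma E_op_eq: "E_op \<alpha> \<beta> f (x, xn) = (\<integral>y. xn powr \<beta> * f y / (xn\<^sup>2 + (norm (x - y))\<^sup>2) powr ((real DIM('a) + 1 - \<alpha>) / 2) \<partial>lebesgue)"
  for f :: "'a::euclidean_space \<Rightarrow> real"
  by (simp add: E_op_def)

lemma E_bound:
  fixes f :: "'a::euclidean_space \<Rightarrow> real"
  assumes xn: "xn > 0"
  shows "ennreal \<bar>E_op \<alpha> \<beta> f (x, xn)\<bar> \<le> (\<integral>\<^sup>+ y. ennreal (kern \<beta> ((real DIM('a) + 1 - \<alpha>) / 2) xn (x - y) * \<bar>f y\<bar>) \<partial>lebesgue)"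
proof -
  let ?c = "(real DIM('a) + 1 - \<alpha>) / 2"
  let ?F = "\<lambda>y. xn powr \<beta> * f y / (xn\<^sup>2 + (norm (x - y))\<^sup>2) powr ?c"
  have n: "norm (?F y) = kern \<beta> ?c xn (x - y) * \<bar>f y\<bar>" for y
    using xn by (simp add: kern_def abs_mult)
  show ?thesis
  proof (cases "integrable lebesgue ?F")
    case True
    have "norm (integral\<^sup>L lebesgue ?F) \<le> (\<integral>\<^sup>+ y. ennreal (kern \<beta> ?c xn (x - y) * \<bar>f y\<bar>) \<partial>lebesgue)"
      using integral_norm_bound_ennreal[OF True] unfolding n .
    then show ?thesis by (simp only: E_op_eq real_norm_def)
  next
    case False
    then show ?thesis by (simp add: E_op_eq not_integrable_integral_eq)
  qed
qed

lemma E_meas1: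
  fixes f :: "'a::euclidean_space \<Rightarrow> real"
  assumes [measurable]: "f \<in> borel_measurable lebesgue"
  shows "(\<lambda>x. E_op \<alpha> \<beta> f (x, xn)) \<in> borel_measurable lebesgue"
proof -
  have "(\<lambda>x. \<integral>y. xn powr \<beta> * f y / (xn\<^sup>2 + (norm (x - y))\<^sup>2) powr ((real DIM('a) + 1 - \<alpha>) / 2) \<partial>lebesgue) \<in> borel_measurable lebesgue"
    by (rule sigma_finite_measure.borel_measurable_lebesgue_integral[OF sf_leb]) measurable
  then show ?thesis by (simp add: E_op_eq)
qed

lemma E_meas2:
  fixes f :: "'a::euclidean_space \<Rightarrow> real"
  assumes [measurable]: "f \<in> borel_measurable lebesgue"
  shows "E_op \<alpha> \<beta> f \<in> borel_measurable lebesgue"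
proof -
  have "(\<lambda>p. \<integral>y. snd p powr \<beta> * f y / ((snd p)\<^sup>2 + (norm (fst p - y))\<^sup>2) powr ((real DIM('a) + 1 - \<alpha>) / 2) \<partial>lebesgue) \<in> borel_measurable lebesgue"
    by (rule sigma_finite_measure.borel_measurable_lebesgue_integral[OF sf_leb]) measurable
  moreover have "E_op \<alpha> \<beta> f = (\<lambda>p. \<integral>y. snd p powr \<beta> * f y / ((snd p)\<^sup>2 + (norm (fst p - y))\<^sup>2) powr ((real DIM('a) + 1 - \<alpha>) / 2) \<partial>lebesgue)"
    by (auto simp: E_op_def fun_eq_iff)
  ultimately show ?thesis by simp
qed

lemma powr_sq_half: fixes z :: real assumes "z > 0" shows "z powr \<gamma> = (z\<^sup>2) powr (\<gamma>/2)"
proof -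
  have e: "z\<^sup>2 = z powr 2" using assms by (simp add: powr_numeral)
  have "(z powr 2) powr (\<gamma>/2) = z powr (2 * (\<gamma>/2))" by (rule powr_powr)
  also have "2 * (\<gamma>/2) = \<gamma>" by simp
  finally show ?thesis using e by simp
qed

lemma Linf_le:
  fixes h :: "'a \<Rightarrow> real"
  assumes [measurable]: "h \<in> borel_measurable M" and le: "\<And>x. x \<in> space M \<Longrightarrow> ennreal \<bar>h x\<bar> \<le> ennreal z" and z: "z \<ge> 0"
  shows "Lp_norm \<infinity> M h \<le> ennreal z"
proof -
  have "\<And>x. x \<in> space M \<Longrightarrow> \<bar>h x\<bar> \<le> z" using le z by (simp add: ennreal_le_iff)
  then have "AE x in M. ereal \<bar>h x\<bar> \<le> ereal z" by (intro AE_I2) simp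
  then have "esssup M (\<lambda>x. ereal \<bar>h x\<bar>) \<le> ereal z" by (intro esssup_I) auto
  then have "e2ennreal (esssup M (\<lambda>x. ereal \<bar>h x\<bar>)) \<le> e2ennreal (ereal z)" by (rule e2ennreal_mono)
  then show ?thesis by (simp add: Lp_norm_inf e2ennreal_ereal)
qed

lemma kern_near:
  assumes xn: "xn > 0" and g: "\<gamma> > 0"
  shows "kern \<beta> (\<gamma>/2) xn z \<le> xn powr (\<beta> - \<gamma>)"
proof -
  have "xn powr \<gamma> = (xn\<^sup>2) powr (\<gamma>/2)" by (rule powr_sq_half[OF xn])
  also have "\<dots> \<le> (xn\<^sup>2 + (norm z)\<^sup>2) powr (\<gamma>/2)"
    by (rule powr_mono2) (use g in auto)
  finally have "xn powr \<gamma> \<le> (xn\<^sup>2 + (norm z)\<^sup>2) powr (\<gamma>/2)" .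
  then have "xn powr \<beta> / (xn\<^sup>2 + (norm z)\<^sup>2) powr (\<gamma>/2) \<le> xn powr \<beta> / xn powr \<gamma>"
    using xn by (intro divide_left_mono) auto
  then show ?thesis by (simp add: kern_def powr_diff)
qed

lemma kern_far:
  fixes x' y :: "'a::euclidean_space"
  assumes xn: "xn > 0" and g: "\<gamma> > 0" and x: "norm x' < R/2" and y: "R \<le> norm y"
  shows "kern \<beta> (\<gamma>/2) xn (x' - y) \<le> xn powr \<beta> * 2 powr \<gamma> * norm y powr (-\<gamma>)"
proof -
  have R: "R > 0" using x norm_ge_zero[of x'] by linarith
  have ny: "norm y / 2 \<le> norm (x' - y)"
    using x y norm_triangle_ineq2[of y x'] norm_minus_commute[of y x'] by linarith
  have ny0: "norm y / 2 > 0" using R y by linarith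
  have "(norm y / 2) powr \<gamma> \<le> norm (x' - y) powr \<gamma>"
    by (rule powr_mono2; use ny ny0 g in linarith)
  also have "norm (x' - y) powr \<gamma> = ((norm (x' - y))\<^sup>2) powr (\<gamma>/2)"
    by (rule powr_sq_half) (use ny ny0 in linarith)
  also have "\<dots> \<le> (xn\<^sup>2 + (norm (x' - y))\<^sup>2) powr (\<gamma>/2)"
    by (rule powr_mono2; use g in simp)
  finally have le: "(norm y / 2) powr \<gamma> \<le> (xn\<^sup>2 + (norm (x' - y))\<^sup>2) powr (\<gamma>/2)" .
  have pos: "(norm y / 2) powr \<gamma> > 0" using ny0 by simp
  have big: "(xn\<^sup>2 + (norm (x' - y))\<^sup>2) powr (\<gamma>/2) > 0" using le pos by linarith
  have "kern \<beta> (\<gamma>/2) xn (x' - y) \<le> xn powr \<beta> / (norm y / 2) powr \<gamma>"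
    unfolding kern_def by (rule divide_left_mono[OF le]) (use pos big in simp_all)
  also have "(norm y / 2) powr \<gamma> = norm y powr \<gamma> / 2 powr \<gamma>"
    by (rule powr_divide)
  also have "xn powr \<beta> / (norm y powr \<gamma> / 2 powr \<gamma>) = xn powr \<beta> * 2 powr \<gamma> * (1 / norm y powr \<gamma>)"
    by simp
  also have "1 / norm y powr \<gamma> = norm y powr (-\<gamma>)" by (simp add: powr_minus_divide)
  finally show ?thesis .
qed

lemma kern_out:
  fixes x' y :: "'a::euclidean_space"
  assumes xn: "xn > 0" and g: "\<gamma> > 0" and y: "norm y < R"
  shows "kern \<beta> (\<gamma>/2) xn (x' - y) \<le> xn powr \<beta> / ((max (norm x' - R) 0)\<^sup>2 + xn\<^sup>2) powr (\<gamma>/2)"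
proof -
  have m: "max (norm x' - R) 0 \<le> norm (x' - y)"
    using y norm_triangle_ineq2[of x' y] by auto
  have "(max (norm x' - R) 0)\<^sup>2 \<le> (norm (x' - y))\<^sup>2"
    by (rule power_mono[OF m]) simp
  then have "((max (norm x' - R) 0)\<^sup>2 + xn\<^sup>2) powr (\<gamma>/2) \<le> (xn\<^sup>2 + (norm (x' - y))\<^sup>2) powr (\<gamma>/2)"
    by (intro powr_mono2) (use g in auto)
  moreover have "((max (norm x' - R) 0)\<^sup>2 + xn\<^sup>2) powr (\<gamma>/2) > 0" using xn by (simp add: add_nonneg_pos)
  ultimately show ?thesis unfolding kern_def using xn by (intro divide_left_mono) auto
qed

lemma part2:
  fixes f :: "'a::euclidean_space \<Rightarrow> real"
  assumes f: "integrable lebesgue f" and R: "R > 0" and supp: "\<forall>y. norm y \<ge> R \<longrightarrow> f y = 0"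
    and xn: "xn > 0" and g: "real DIM('a) + 1 - \<alpha> > 0"
  shows "\<bar>E_op \<alpha> \<beta> f (x', xn)\<bar> \<le> xn powr \<beta> / ((max (norm x' - R) 0)\<^sup>2 + xn\<^sup>2) powr ((real DIM('a) + 1 - \<alpha>) / 2) * (\<integral>y. \<bar>f y\<bar> \<partial>lebesgue)"
proof -
  let ?\<gamma> = "real DIM('a) + 1 - \<alpha>"
  let ?M = "xn powr \<beta> / ((max (norm x' - R) 0)\<^sup>2 + xn\<^sup>2) powr (?\<gamma> / 2)"
  have M0: "?M \<ge> 0" by simp
  have fm[measurable]: "f \<in> borel_measurable lebesgue" using f by auto
  have "ennreal \<bar>E_op \<alpha> \<beta> f (x', xn)\<bar> \<le> (\<integral>\<^sup>+ y. ennreal (kern \<beta> (?\<gamma>/2) xn (x' - y) * \<bar>f y\<bar>) \<partial>lebesgue)"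
    by (rule E_bound[OF xn])
  also have "\<dots> \<le> (\<integral>\<^sup>+ y. ennreal ?M * ennreal \<bar>f y\<bar> \<partial>lebesgue)"
  proof (rule nn_integral_mono)
    fix y :: 'a
    show "ennreal (kern \<beta> (?\<gamma>/2) xn (x' - y) * \<bar>f y\<bar>) \<le> ennreal ?M * ennreal \<bar>f y\<bar>"
    proof (cases "norm y < R")
      case True
      have "kern \<beta> (?\<gamma>/2) xn (x' - y) * \<bar>f y\<bar> \<le> ?M * \<bar>f y\<bar>"
        by (rule mult_right_mono[OF kern_out[OF xn g True]]) simp
      then show ?thesis by (simp add: ennreal_mult[symmetric] ennreal_leI)
    next
      case False then show ?thesis using supp by simp
    qed
  qed
  also have "\<dots> = ennreal ?M * (\<integral>\<^sup>+ y. ennreal \<bar>f y\<bar> \<partial>lebesgue)" by (simp add: nn_integral_cmult)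
  also have "(\<integral>\<^sup>+ y. ennreal \<bar>f y\<bar> \<partial>lebesgue) = ennreal (\<integral>y. \<bar>f y\<bar> \<partial>lebesgue)"
    by (rule nn_integral_eq_integral) (use f in auto)
  also have "ennreal ?M * ennreal (\<integral>y. \<bar>f y\<bar> \<partial>lebesgue) = ennreal (?M * (\<integral>y. \<bar>f y\<bar> \<partial>lebesgue))"
    by (rule ennreal_mult[symmetric]) auto
  finally show ?thesis by (subst (asm) ennreal_le_iff) (auto intro!: mult_nonneg_nonneg)
qed

lemma part3_common:
  fixes f :: "'a::euclidean_space \<Rightarrow> real" and \<alpha> \<beta> \<gamma> R xn :: real and x' :: 'a
  assumes R: "R > 0" and supp: "\<forall>y. norm y < R \<longrightarrow> f y = 0" and xn: "xn > 0" and x: "norm x' < R/2"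
    and g: "\<gamma> > 0" and \<gamma>: "\<gamma> = real DIM('a) + 1 - \<alpha>"
  defines "gg \<equiv> \<lambda>y. kern \<beta> (\<gamma>/2) xn (x' - y) * indicator {y. R \<le> norm y} y"
  shows "ennreal \<bar>E_op \<alpha> \<beta> f (x', xn)\<bar> \<le> (\<integral>\<^sup>+ y. ennreal (gg y * \<bar>f y\<bar>) \<partial>lebesgue)"
    and "\<And>y. gg y \<le> xn powr \<beta> * 2 powr \<gamma> * (indicator {y. R \<le> norm y} y * norm y powr (-\<gamma>))"
    and "\<And>y. gg y \<ge> 0"
    and "gg \<in> borel_measurable lebesgue"
proof -
  have "ennreal \<bar>E_op \<alpha> \<beta> f (x', xn)\<bar> \<le> (\<integral>\<^sup>+ y. ennreal (kern \<beta> ((real DIM('a) + 1 - \<alpha>) / 2) xn (x' - y) * \<bar>f y\<bar>) \<partial>lebesgue)"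
    by (rule E_bound[OF xn])
  also have "\<dots> = (\<integral>\<^sup>+ y. ennreal (gg y * \<bar>f y\<bar>) \<partial>lebesgue)"
    by (rule nn_integral_cong) (use supp in \<open>auto simp: gg_def \<gamma> indicator_def\<close>)
  finally show "ennreal \<bar>E_op \<alpha> \<beta> f (x', xn)\<bar> \<le> (\<integral>\<^sup>+ y. ennreal (gg y * \<bar>f y\<bar>) \<partial>lebesgue)" .
  show "gg y \<le> xn powr \<beta> * 2 powr \<gamma> * (indicator {y. R \<le> norm y} y * norm y powr (-\<gamma>))" for y
  proof (cases "R \<le> norm y")
    case True
    then show ?thesis using kern_far[OF xn g x True, of \<beta>] by (simp add: gg_def)
  qed (simp add: gg_def)
  show "gg y \<ge> 0" for y using kern_pos[OF xn, of \<beta> "\<gamma>/2" "x' - y"] by (simp add: gg_def)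
  show "gg \<in> borel_measurable lebesgue" unfolding gg_def kern_def by measurable
qed

lemma tail_le_pow:
  assumes "R \<le> (r::real)" "R > 0" "\<gamma> \<ge> 0"
  shows "r powr (-\<gamma>) \<le> R powr (-\<gamma>)"
  by (rule powr_mono2') (use assms in auto)

lemma recip_ereal: "recip (ereal p) = 1 / p" by (simp add: recip_def)
lemma recip_inf: "recip \<infinity> = 0" by (simp add: recip_def)

lemma ereal_cases_ge1:
  fixes s :: ereal
  assumes "1 \<le> s"
  obtains "s = \<infinity>" | "s = 1" | p where "s = ereal p" "p > 1"
proof (cases s)
  case (real r)
  then show ?thesis using assms that by (cases "r = 1") (auto simp: one_ereal_def)
qed (use assms that in auto)

lemma part3:
  fixes \<alpha> \<beta> :: real and s :: ereal
  assumes s1: "1 \<le> s" and hs: "recip s > (\<alpha> - 1) / real DIM('a::euclidean_space)"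
    and gpos: "real DIM('a) + 1 - \<alpha> > 0"
  shows "\<exists>C>0. \<forall>(f::'a \<Rightarrow> real) R xn x'. f \<in> borel_measurable lebesgue \<and> R > 0 \<and> (\<forall>y. norm y < R \<longrightarrow> f y = 0) \<and> xn > 0 \<and> norm x' < R/2 \<longrightarrow>
     ennreal \<bar>E_op \<alpha> \<beta> f (x', xn)\<bar> \<le> ennreal (C * xn powr \<beta> * R powr ((\<alpha> - 1) - real DIM('a) * recip s)) * Lp_norm s lebesgue f"
proof -
  define d where "d = real DIM('a)"
  define \<gamma> where "\<gamma> = d + 1 - \<alpha>"
  have d0: "d > 0" by (simp add: d_def)
  have g0: "\<gamma> > 0" using gpos by (simp add: \<gamma>_def d_def)
  have \<gamma>def: "\<gamma> = real DIM('a) + 1 - \<alpha>" by (simp add: \<gamma>_def d_def)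
  from s1 show ?thesis
  proof (cases rule: ereal_cases_ge1)
    case 2
    show ?thesis
    proof (intro exI[of _ "2 powr \<gamma>"] conjI allI impI)
      show "2 powr \<gamma> > 0" by simp
      fix f :: "'a \<Rightarrow> real" and R xn :: real and x' :: 'a
      assume H: "f \<in> borel_measurable lebesgue \<and> R > 0 \<and> (\<forall>y. norm y < R \<longrightarrow> f y = 0) \<and> xn > 0 \<and> norm x' < R/2"
      then have fm[measurable]: "f \<in> borel_measurable lebesgue" and R: "R > 0" and xn: "xn > 0"
        and supp: "\<forall>y. norm y < R \<longrightarrow> f y = 0" and x: "norm x' < R/2" by auto
      note c = part3_common[OF R supp xn x g0 \<gamma>def, where \<beta>=\<beta>]
      let ?G = "xn powr \<beta> * 2 powr \<gamma> * R powr (-\<gamma>)"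
      have gle: "kern \<beta> (\<gamma>/2) xn (x' - y) * indicator {y. R \<le> norm y} y \<le> ?G" for y
      proof (cases "R \<le> norm y")
        case True
        have "kern \<beta> (\<gamma>/2) xn (x' - y) * indicator {y. R \<le> norm y} y \<le> xn powr \<beta> * 2 powr \<gamma> * norm y powr (-\<gamma>)"
          using c(2)[of y] True by simp
        also have "\<dots> \<le> ?G"
          by (intro mult_left_mono tail_le_pow) (use True R g0 in auto)
        finally show ?thesis .
      qed (simp add: R)
      have "ennreal \<bar>E_op \<alpha> \<beta> f (x', xn)\<bar> \<le> ennreal ?G * Lp_norm 1 lebesgue f"
        using c(1) holder_one[OF fm gle c(3)] by (rule order_trans)
      moreover have "?G = 2 powr \<gamma> * xn powr \<beta> * R powr ((\<alpha> - 1) - real DIM('a) * recip s)"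
      proof -
        have e: "(\<alpha> - 1) - real DIM('a) * recip s = -\<gamma>" using 2 by (simp add: recip_def \<gamma>_def d_def)
        show ?thesis unfolding e by (simp add: mult_ac)
      qed
      ultimately show "ennreal \<bar>E_op \<alpha> \<beta> f (x', xn)\<bar> \<le> ennreal (2 powr \<gamma> * xn powr \<beta> * R powr ((\<alpha> - 1) - real DIM('a) * recip s)) * Lp_norm s lebesgue f"
        using 2 by simp
    qed
  next
    case 1
    then have "\<alpha> < 1" using hs d0 by (simp add: recip_def d_def divide_less_0_iff)
    then have gd: "\<gamma> > d" by (simp add: \<gamma>_def)
    define J where "J = (\<integral>\<^sup>+ y. indicator {y::'a. 1 \<le> norm y} y * ennreal (norm y powr (-\<gamma>)) \<partial>lebesgue)"
    have Jfin: "J < \<infinity>" unfolding J_def by (rule tail_finite) (use gd in \<open>simp add: d_def\<close>)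
    define Jr where "Jr = enn2real J"
    have JJr: "J \<le> ennreal (Jr + 1)" using Jfin by (simp add: Jr_def)
    have Jr0: "Jr \<ge> 0" by (simp add: Jr_def)
    show ?thesis
    proof (intro exI[of _ "2 powr \<gamma> * (Jr + 1)"] conjI allI impI)
      show "2 powr \<gamma> * (Jr + 1) > 0" using Jr0 by simp
      fix f :: "'a \<Rightarrow> real" and R xn :: real and x' :: 'a
      assume H: "f \<in> borel_measurable lebesgue \<and> R > 0 \<and> (\<forall>y. norm y < R \<longrightarrow> f y = 0) \<and> xn > 0 \<and> norm x' < R/2"
      then have fm[measurable]: "f \<in> borel_measurable lebesgue" and R: "R > 0" and xn: "xn > 0"
        and supp: "\<forall>y. norm y < R \<longrightarrow> f y = 0" and x: "norm x' < R/2" by auto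
      note c = part3_common[OF R supp xn x g0 \<gamma>def, where \<beta>=\<beta>]
      let ?Kb = "xn powr \<beta> * 2 powr \<gamma>"
      let ?G = "?Kb * R powr (d - \<gamma>) * (Jr + 1)"
      have "(\<integral>\<^sup>+ y. ennreal (kern \<beta> (\<gamma>/2) xn (x' - y) * indicator {y. R \<le> norm y} y) \<partial>lebesgue)
          \<le> (\<integral>\<^sup>+ y. ennreal ?Kb * (indicator {y::'a. R \<le> norm y} y * ennreal (norm y powr (-\<gamma>))) \<partial>lebesgue)"
      proof (rule nn_integral_mono)
        fix y :: 'a
        have "ennreal (kern \<beta> (\<gamma>/2) xn (x' - y) * indicator {y. R \<le> norm y} y) \<le> ennreal (?Kb * (indicator {y. R \<le> norm y} y * norm y powr (-\<gamma>)))"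
          using c(2)[of y] by (intro ennreal_leI) (simp add: mult.assoc)
        also have "\<dots> = ennreal ?Kb * (indicator {y::'a. R \<le> norm y} y * ennreal (norm y powr (-\<gamma>)))"
          by (simp add: ennreal_mult indicator_def)
        finally show "ennreal (kern \<beta> (\<gamma>/2) xn (x' - y) * indicator {y. R \<le> norm y} y) \<le> ennreal ?Kb * (indicator {y::'a. R \<le> norm y} y * ennreal (norm y powr (-\<gamma>)))" .
      qed
      also have "\<dots> = ennreal ?Kb * (\<integral>\<^sup>+ y. indicator {y::'a. R \<le> norm y} y * ennreal (norm y powr (-\<gamma>)) \<partial>lebesgue)"
        by (rule nn_integral_cmult) measurable
      also have "\<dots> = ennreal ?Kb * (ennreal (R powr (d - \<gamma>)) * J)"
        unfolding J_def d_def by (subst tail_scaled[OF R]) simp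
      also have "\<dots> \<le> ennreal ?Kb * (ennreal (R powr (d - \<gamma>)) * ennreal (Jr + 1))"
        by (intro mult_left_mono JJr) auto
      also have "\<dots> = ennreal ?G" using Jr0 by (simp add: ennreal_mult ennreal_plus mult_ac)
      finally have intg: "(\<integral>\<^sup>+ y. ennreal (kern \<beta> (\<gamma>/2) xn (x' - y) * indicator {y. R \<le> norm y} y) \<partial>lebesgue) \<le> ennreal ?G" .
      have "ennreal \<bar>E_op \<alpha> \<beta> f (x', xn)\<bar> \<le> ennreal ?G * Lp_norm \<infinity> lebesgue f"
        using c(1) holder_inf[OF fm c(4) intg c(3)] by (rule order_trans)
      moreover have "?G = 2 powr \<gamma> * (Jr + 1) * xn powr \<beta> * R powr ((\<alpha> - 1) - real DIM('a) * recip s)"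
        using 1 by (simp add: recip_def \<gamma>_def d_def)
      ultimately show "ennreal \<bar>E_op \<alpha> \<beta> f (x', xn)\<bar> \<le> ennreal (2 powr \<gamma> * (Jr + 1) * xn powr \<beta> * R powr ((\<alpha> - 1) - real DIM('a) * recip s)) * Lp_norm s lebesgue f"
        using 1 by simp
    qed
  next
    case (3 p)
    define q where "q = p / (p - 1)"
    have p1: "p > 1" using 3 by simp
    have q1: "q > 1" and pq: "1/p + 1/q = 1" using p1 by (auto simp: q_def field_simps)
    have "1/p > (\<alpha> - 1) / d" using hs 3 by (simp add: recip_def d_def)
    then have "d / p > \<alpha> - 1" using d0 by (simp add: field_simps)
    then have "\<gamma> > d * (1 - 1/p)" by (simp add: \<gamma>_def algebra_simps)
    moreover have "1 - 1/p = 1/q" using pq by simp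
    ultimately have "\<gamma> > d / q" by simp
    then have gqd: "\<gamma> * q > d" using q1 by (simp add: field_simps)
    define J where "J = (\<integral>\<^sup>+ y. indicator {y::'a. 1 \<le> norm y} y * ennreal (norm y powr (-(\<gamma> * q))) \<partial>lebesgue)"
    have Jfin: "J < \<infinity>" unfolding J_def by (rule tail_finite) (use gqd in \<open>simp add: d_def\<close>)
    define Jr where "Jr = enn2real J"
    have JJr: "J \<le> ennreal (Jr + 1)" using Jfin by (simp add: Jr_def)
    have Jr0: "Jr \<ge> 0" by (simp add: Jr_def)
    show ?thesis
    proof (intro exI[of _ "2 powr \<gamma> * (Jr + 1) powr (1/q)"] conjI allI impI)
      show "2 powr \<gamma> * (Jr + 1) powr (1/q) > 0" using Jr0 by simp
      fix f :: "'a \<Rightarrow> real" and R xn :: real and x' :: 'a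
      assume H: "f \<in> borel_measurable lebesgue \<and> R > 0 \<and> (\<forall>y. norm y < R \<longrightarrow> f y = 0) \<and> xn > 0 \<and> norm x' < R/2"
      then have fm[measurable]: "f \<in> borel_measurable lebesgue" and R: "R > 0" and xn: "xn > 0"
        and supp: "\<forall>y. norm y < R \<longrightarrow> f y = 0" and x: "norm x' < R/2" by auto
      note c = part3_common[OF R supp xn x g0 \<gamma>def, where \<beta>=\<beta>]
      let ?Kb = "xn powr \<beta> * 2 powr \<gamma>"
      have Kb0: "?Kb > 0" using xn by simp
      let ?G = "?Kb powr q * R powr (d - \<gamma> * q) * (Jr + 1)"
      have "(\<integral>\<^sup>+ y. ennreal ((kern \<beta> (\<gamma>/2) xn (x' - y) * indicator {y. R \<le> norm y} y) powr q) \<partial>lebesgue)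
          \<le> (\<integral>\<^sup>+ y. ennreal (?Kb powr q) * (indicator {y::'a. R \<le> norm y} y * ennreal (norm y powr (-(\<gamma> * q)))) \<partial>lebesgue)"
      proof (rule nn_integral_mono)
        fix y :: 'a
        show "ennreal ((kern \<beta> (\<gamma>/2) xn (x' - y) * indicator {y. R \<le> norm y} y) powr q) \<le> ennreal (?Kb powr q) * (indicator {y::'a. R \<le> norm y} y * ennreal (norm y powr (-(\<gamma> * q))))"
        proof (cases "R \<le> norm y")
          case True
          have ny: "norm y > 0" using True R by linarith
          have "(kern \<beta> (\<gamma>/2) xn (x' - y) * indicator {y. R \<le> norm y} y) powr q \<le> (?Kb * norm y powr (-\<gamma>)) powr q"
            by (rule powr_mono2) (use c(2)[of y] c(3)[of y] True q1 in \<open>auto simp: mult.assoc\<close>)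
          also have "\<dots> = ?Kb powr q * norm y powr (-(\<gamma> * q))"
            using Kb0 ny by (simp add: powr_mult powr_powr)
          finally show ?thesis using True by (simp add: ennreal_mult[symmetric] ennreal_leI)
        qed simp
      qed
      also have "\<dots> = ennreal (?Kb powr q) * (\<integral>\<^sup>+ y. indicator {y::'a. R \<le> norm y} y * ennreal (norm y powr (-(\<gamma> * q))) \<partial>lebesgue)"
        by (rule nn_integral_cmult) measurable
      also have "\<dots> = ennreal (?Kb powr q) * (ennreal (R powr (d - \<gamma> * q)) * J)"
        unfolding J_def d_def by (subst tail_scaled[OF R]) simp
      also have "\<dots> \<le> ennreal (?Kb powr q) * (ennreal (R powr (d - \<gamma> * q)) * ennreal (Jr + 1))"
        by (intro mult_left_mono JJr) auto
      also have "\<dots> = ennreal ?G" using Jr0 by (simp add: ennreal_mult ennreal_plus mult_ac)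
      finally have intg: "(\<integral>\<^sup>+ y. ennreal ((kern \<beta> (\<gamma>/2) xn (x' - y) * indicator {y. R \<le> norm y} y) powr q) \<partial>lebesgue) \<le> ennreal ?G" .
      have G0: "?G \<ge> 0" using Jr0 by simp
      have "ennreal \<bar>E_op \<alpha> \<beta> f (x', xn)\<bar> \<le> ennreal (?G powr (1/q)) * Lp_norm (ereal p) lebesgue f"
        using c(1) holder_fin[OF p1 q1 pq c(4) fm c(3) intg G0] by (rule order_trans)
      moreover have "?G powr (1/q) = 2 powr \<gamma> * (Jr + 1) powr (1/q) * xn powr \<beta> * R powr ((\<alpha> - 1) - real DIM('a) * recip s)"
      proof -
        have "?G powr (1/q) = (?Kb powr q) powr (1/q) * (R powr (d - \<gamma> * q)) powr (1/q) * (Jr + 1) powr (1/q)"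
          using Kb0 R Jr0 by (simp add: powr_mult)
        also have "(?Kb powr q) powr (1/q) = ?Kb" using Kb0 q1 by (simp add: powr_powr)
        also have "(R powr (d - \<gamma> * q)) powr (1/q) = R powr (d / q - \<gamma>)" using q1 by (simp add: powr_powr field_simps)
        also have "d / q - \<gamma> = (\<alpha> - 1) - real DIM('a) * recip s"
        proof -
          have "d / q = d * (1/q)" by simp
          also have "1/q = 1 - 1/p" using pq by simp
          finally have e1: "d / q = d - d / p" by (simp add: algebra_simps)
          have "d / q - \<gamma> = (\<alpha> - 1) - d * (1/p)" using e1 by (simp add: \<gamma>_def algebra_simps)
          then show ?thesis using 3 by (simp add: recip_def d_def)
        qed
        finally show ?thesis by (simp add: mult_ac)
      qed
      ultimately show "ennreal \<bar>E_op \<alpha> \<beta> f (x', xn)\<bar> \<le> ennreal (2 powr \<gamma> * (Jr + 1) powr (1/q) * xn powr \<beta> * R powr ((\<alpha> - 1) - real DIM('a) * recip s)) * Lp_norm s lebesgue f"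
        using 3 by simp
    qed
  qed
qed

lemma kern_powr1: "xn > 0 \<Longrightarrow> kern \<beta> c xn z powr 1 = kern \<beta> c xn z"
  using kern_pos[of xn \<beta> c z] by simp

lemma fin_le_ennreal: "(X::ennreal) < \<infinity> \<Longrightarrow> X \<le> ennreal (enn2real X + 1)"
  by (cases X) auto

lemma part1_pt:
  fixes \<alpha> \<beta> :: real and s :: ereal
  assumes s1: "1 \<le> s" and hyp: "1 < (real DIM('a::euclidean_space) + 1 - \<alpha>) / real DIM('a) + recip s"
    and gpos: "real DIM('a) + 1 - \<alpha> > 0"
  shows "\<exists>C>0. \<forall>(f::'a \<Rightarrow> real) xn x'. f \<in> borel_measurable lebesgue \<and> xn > 0 \<longrightarrow>
     ennreal \<bar>E_op \<alpha> \<beta> f (x', xn)\<bar> \<le> ennreal (C * xn powr (real DIM('a) * (1 - recip s) - (real DIM('a) + 1 - \<alpha> - \<beta>))) * Lp_norm s lebesgue f"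
proof -
  define d where "d = real DIM('a)"
  define \<gamma> where "\<gamma> = d + 1 - \<alpha>"
  have d0: "d > 0" by (simp add: d_def)
  have g0: "\<gamma> > 0" using gpos by (simp add: \<gamma>_def d_def)
  have \<gamma>def: "(real DIM('a) + 1 - \<alpha>) / 2 = \<gamma> / 2" by (simp add: \<gamma>_def d_def)
  have ex: "real DIM('a) * (1 - recip s) - (real DIM('a) + 1 - \<alpha> - \<beta>) = d * (1 - recip s) - \<gamma> + \<beta>"
    by (simp add: \<gamma>_def d_def)
  have Eb: "ennreal \<bar>E_op \<alpha> \<beta> f (x', xn)\<bar> \<le> (\<integral>\<^sup>+ y. ennreal (kern \<beta> (\<gamma>/2) xn (x' - y) * \<bar>f y\<bar>) \<partial>lebesgue)"
    if "xn > 0" for f :: "'a \<Rightarrow> real" and xn x'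
    using E_bound[OF that, of \<alpha> \<beta> f x'] by (simp only: \<gamma>def)
  from s1 show ?thesis
  proof (cases rule: ereal_cases_ge1)
    case 2
    show ?thesis
    proof (intro exI[of _ 1] conjI allI impI)
      fix f :: "'a \<Rightarrow> real" and xn :: real and x' :: 'a
      assume H: "f \<in> borel_measurable lebesgue \<and> xn > 0"
      then have fm[measurable]: "f \<in> borel_measurable lebesgue" and xn: "xn > 0" by auto
      have gle: "kern \<beta> (\<gamma>/2) xn (x' - y) \<le> xn powr (\<beta> - \<gamma>)" for y by (rule kern_near[OF xn g0])
      have "ennreal \<bar>E_op \<alpha> \<beta> f (x', xn)\<bar> \<le> ennreal (xn powr (\<beta> - \<gamma>)) * Lp_norm 1 lebesgue f"
      proof -
        have "(\<integral>\<^sup>+ y. ennreal (kern \<beta> (\<gamma>/2) xn (x' - y) * \<bar>f y\<bar>) \<partial>lebesgue) \<le> ennreal (xn powr (\<beta> - \<gamma>)) * Lp_norm 1 lebesgue f"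
          by (rule holder_one[OF fm gle]) (rule less_imp_le[OF kern_pos[OF xn]])
        then show ?thesis using Eb[OF xn] by (rule order_trans[rotated])
      qed
      then show "ennreal \<bar>E_op \<alpha> \<beta> f (x', xn)\<bar> \<le> ennreal (1 * xn powr (real DIM('a) * (1 - recip s) - (real DIM('a) + 1 - \<alpha> - \<beta>))) * Lp_norm s lebesgue f"
        using 2 by (simp add: recip_def \<gamma>_def d_def)
    qed simp
  next
    case 1
    then have gd: "\<gamma> > d" using hyp d0 by (simp add: recip_def \<gamma>_def d_def field_simps)
    define B where "B = (\<integral>\<^sup>+ w. ennreal ((1 + (norm (w::'a))\<^sup>2) powr (-(\<gamma>/2 * 1))) \<partial>lebesgue)"
    have Bfin: "B < \<infinity>" unfolding B_def by (rule bump_finite) (use gd in \<open>simp add: d_def\<close>)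
    define Br where "Br = enn2real B"
    have BBr: "B \<le> ennreal (Br + 1)" using fin_le_ennreal[OF Bfin] by (simp add: Br_def)
    have Br0: "Br \<ge> 0" by (simp add: Br_def)
    show ?thesis
    proof (intro exI[of _ "Br + 1"] conjI allI impI)
      show "Br + 1 > 0" using Br0 by simp
      fix f :: "'a \<Rightarrow> real" and xn :: real and x' :: 'a
      assume H: "f \<in> borel_measurable lebesgue \<and> xn > 0"
      then have fm[measurable]: "f \<in> borel_measurable lebesgue" and xn: "xn > 0" by auto
      have "(\<integral>\<^sup>+ y. ennreal (kern \<beta> (\<gamma>/2) xn (x' - y)) \<partial>lebesgue) = (\<integral>\<^sup>+ y. ennreal (kern \<beta> (\<gamma>/2) xn (x' - y) powr 1) \<partial>lebesgue)"
        by (rule nn_integral_cong) (simp only: kern_powr1[OF xn])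
      also have "\<dots> = ennreal (xn powr (d + 1 * (\<beta> - 2 * (\<gamma>/2)))) * B"
        unfolding B_def d_def by (rule kern_int[OF xn]) simp
      also have "\<dots> \<le> ennreal (xn powr (d + 1 * (\<beta> - 2 * (\<gamma>/2)))) * ennreal (Br + 1)"
        by (intro mult_left_mono BBr) simp
      also have "\<dots> = ennreal (xn powr (d + 1 * (\<beta> - 2 * (\<gamma>/2))) * (Br + 1))"
        using Br0 by (simp add: ennreal_mult)
      finally have intg: "(\<integral>\<^sup>+ y. ennreal (kern \<beta> (\<gamma>/2) xn (x' - y)) \<partial>lebesgue) \<le> ennreal (xn powr (d + 1 * (\<beta> - 2 * (\<gamma>/2))) * (Br + 1))" .
      have km: "(\<lambda>y. kern \<beta> (\<gamma>/2) xn (x' - y)) \<in> borel_measurable lebesgue" unfolding kern_def by measurable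
      have "ennreal \<bar>E_op \<alpha> \<beta> f (x', xn)\<bar> \<le> ennreal (xn powr (d + 1 * (\<beta> - 2 * (\<gamma>/2))) * (Br + 1)) * Lp_norm \<infinity> lebesgue f"
      proof -
        have "(\<integral>\<^sup>+ y. ennreal (kern \<beta> (\<gamma>/2) xn (x' - y) * \<bar>f y\<bar>) \<partial>lebesgue) \<le> ennreal (xn powr (d + 1 * (\<beta> - 2 * (\<gamma>/2))) * (Br + 1)) * Lp_norm \<infinity> lebesgue f"
          by (rule holder_inf[OF fm km intg]) (rule less_imp_le[OF kern_pos[OF xn]])
        then show ?thesis using Eb[OF xn] by (rule order_trans[rotated])
      qed
      moreover have "xn powr (d + 1 * (\<beta> - 2 * (\<gamma>/2))) * (Br + 1) = (Br + 1) * xn powr (real DIM('a) * (1 - recip s) - (real DIM('a) + 1 - \<alpha> - \<beta>))"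
      proof -
        have "d + 1 * (\<beta> - 2 * (\<gamma>/2)) = real DIM('a) * (1 - recip s) - (real DIM('a) + 1 - \<alpha> - \<beta>)"
          using 1 by (simp add: recip_def \<gamma>_def d_def field_simps)
        then show ?thesis by (metis mult.commute)
      qed
      ultimately show "ennreal \<bar>E_op \<alpha> \<beta> f (x', xn)\<bar> \<le> ennreal ((Br + 1) * xn powr (real DIM('a) * (1 - recip s) - (real DIM('a) + 1 - \<alpha> - \<beta>))) * Lp_norm s lebesgue f"
        using 1 by (simp only:)
    qed
  next
    case (3 p)
    define q where "q = p / (p - 1)"
    have p1: "p > 1" using 3 by simp
    have q1: "q > 1" and pq: "1/p + 1/q = 1" using p1 by (auto simp: q_def field_simps)
    have iq: "1/q = 1 - 1/p" using pq by simp
    have "1 < \<gamma> / d + 1/p" using hyp 3 by (simp add: recip_def \<gamma>_def d_def)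
    then have "1/q < \<gamma> / d" using iq by simp
    then have "d * (1/q) < \<gamma>" using d0 by (simp add: field_simps)
    then have gqd: "\<gamma> * q > d" using q1 by (simp add: field_simps)
    define B where "B = (\<integral>\<^sup>+ w. ennreal ((1 + (norm (w::'a))\<^sup>2) powr (-(\<gamma>/2 * q))) \<partial>lebesgue)"
    have Bfin: "B < \<infinity>" unfolding B_def by (rule bump_finite) (use gqd in \<open>simp add: d_def\<close>)
    define Br where "Br = enn2real B"
    have BBr: "B \<le> ennreal (Br + 1)" using fin_le_ennreal[OF Bfin] by (simp add: Br_def)
    have Br0: "Br \<ge> 0" by (simp add: Br_def)
    show ?thesis
    proof (intro exI[of _ "(Br + 1) powr (1/q)"] conjI allI impI)
      show "(Br + 1) powr (1/q) > 0" using Br0 by simp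
      fix f :: "'a \<Rightarrow> real" and xn :: real and x' :: 'a
      assume H: "f \<in> borel_measurable lebesgue \<and> xn > 0"
      then have fm[measurable]: "f \<in> borel_measurable lebesgue" and xn: "xn > 0" by auto
      let ?e = "d + q * (\<beta> - 2 * (\<gamma>/2))"
      have "(\<integral>\<^sup>+ y. ennreal (kern \<beta> (\<gamma>/2) xn (x' - y) powr q) \<partial>lebesgue) = ennreal (xn powr ?e) * B"
        unfolding B_def d_def by (rule kern_int[OF xn]) (use q1 in simp)
      also have "\<dots> \<le> ennreal (xn powr ?e) * ennreal (Br + 1)"
        by (intro mult_left_mono BBr) simp
      also have "\<dots> = ennreal (xn powr ?e * (Br + 1))"
        using Br0 by (simp add: ennreal_mult)
      finally have intg: "(\<integral>\<^sup>+ y. ennreal (kern \<beta> (\<gamma>/2) xn (x' - y) powr q) \<partial>lebesgue) \<le> ennreal (xn powr ?e * (Br + 1))" .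
      have km: "(\<lambda>y. kern \<beta> (\<gamma>/2) xn (x' - y)) \<in> borel_measurable lebesgue" unfolding kern_def by measurable
      have G0: "xn powr ?e * (Br + 1) \<ge> 0" using Br0 by simp
      have "ennreal \<bar>E_op \<alpha> \<beta> f (x', xn)\<bar> \<le> ennreal ((xn powr ?e * (Br + 1)) powr (1/q)) * Lp_norm (ereal p) lebesgue f"
      proof -
        have "(\<integral>\<^sup>+ y. ennreal (kern \<beta> (\<gamma>/2) xn (x' - y) * \<bar>f y\<bar>) \<partial>lebesgue) \<le> ennreal ((xn powr ?e * (Br + 1)) powr (1/q)) * Lp_norm (ereal p) lebesgue f"
          by (rule holder_fin[OF p1 q1 pq km fm _ intg G0]) (rule less_imp_le[OF kern_pos[OF xn]])
        then show ?thesis using Eb[OF xn] by (rule order_trans[rotated])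
      qed
      moreover have "(xn powr ?e * (Br + 1)) powr (1/q) = (Br + 1) powr (1/q) * xn powr (real DIM('a) * (1 - recip s) - (real DIM('a) + 1 - \<alpha> - \<beta>))"
      proof -
        have "(xn powr ?e * (Br + 1)) powr (1/q) = (xn powr ?e) powr (1/q) * (Br + 1) powr (1/q)"
          using Br0 xn by (simp add: powr_mult)
        also have "(xn powr ?e) powr (1/q) = xn powr (?e / q)" by (simp add: powr_powr)
        also have "?e / q = d * (1/q) + \<beta> - \<gamma>" using q1 by (simp add: field_simps)
        also have "d * (1/q) + \<beta> - \<gamma> = real DIM('a) * (1 - recip s) - (real DIM('a) + 1 - \<alpha> - \<beta>)"
          using 3 iq by (simp add: recip_def \<gamma>_def d_def)
        finally show ?thesis by (simp add: mult_ac)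
      qed
      ultimately show "ennreal \<bar>E_op \<alpha> \<beta> f (x', xn)\<bar> \<le> ennreal ((Br + 1) powr (1/q) * xn powr (real DIM('a) * (1 - recip s) - (real DIM('a) + 1 - \<alpha> - \<beta>))) * Lp_norm s lebesgue f"
        using 3 by (simp only:)
    qed
  qed
qed

lemma young_identity:
  fixes k z q p \<theta> a b :: real
  assumes k: "k > 0" and qa: "q * (\<theta> + a) = 1" and pb: "p * (\<theta> + b) = 1"
  shows "(k powr q * \<bar>z\<bar> powr p) powr \<theta> * (k powr q) powr a * (\<bar>z\<bar> powr p) powr b = k * \<bar>z\<bar>"
proof (cases "z = 0")
  case True then show ?thesis by simp
next
  case False
  then have z: "\<bar>z\<bar> > 0" by simp
  have "(k powr q * \<bar>z\<bar> powr p) powr \<theta> * (k powr q) powr a * (\<bar>z\<bar> powr p) powr b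
      = (k powr (q * \<theta>) * k powr (q * a)) * (\<bar>z\<bar> powr (p * \<theta>) * \<bar>z\<bar> powr (p * b))"
    using k z by (simp add: powr_mult powr_powr mult_ac)
  also have "\<dots> = k powr (q * (\<theta> + a)) * \<bar>z\<bar> powr (p * (\<theta> + b))"
    by (simp add: powr_add[symmetric] distrib_left)
  also have "\<dots> = k * \<bar>z\<bar>" using qa pb k z by simp
  finally show ?thesis .
qed

lemma ennreal_cmult_top: "c > 0 \<Longrightarrow> ennreal c * \<infinity> = \<infinity>"
  by (simp add: ennreal_mult_top)

lemma young_pointwise:
  fixes f :: "'a::euclidean_space \<Rightarrow> real" and x :: 'a
  assumes xn: "xn > 0" and fm[measurable]: "f \<in> borel_measurable lebesgue"
    and w: "\<theta> > 0" "a \<ge> 0" "b \<ge> 0" "\<theta> + a + b = 1"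
    and q: "q > 0" "q * (\<theta> + a) = 1" and p: "p > 0" "p * (\<theta> + b) = 1" and tt: "tt > 0" "\<theta> * tt = 1"
    and Bint: "(\<integral>\<^sup>+ y. ennreal (kern \<beta> ((real DIM('a) + 1 - \<alpha>) / 2) xn (x - y) powr q) \<partial>lebesgue) \<le> ennreal Br" "Br > 0"
    and D: "(\<integral>\<^sup>+ y. ennreal (\<bar>f y\<bar> powr p) \<partial>lebesgue) = ennreal Dr" "Dr > 0"
  shows "ennreal (\<bar>E_op \<alpha> \<beta> f (x, xn)\<bar> powr tt) \<le> ennreal (Br powr (a * tt) * Dr powr (b * tt)) *
           (\<integral>\<^sup>+ y. ennreal (kern \<beta> ((real DIM('a) + 1 - \<alpha>) / 2) xn (x - y) powr q * \<bar>f y\<bar> powr p) \<partial>lebesgue)"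
proof -
  let ?c = "(real DIM('a) + 1 - \<alpha>) / 2"
  let ?k = "\<lambda>y. kern \<beta> ?c xn (x - y)"
  let ?A = "\<integral>\<^sup>+ y. ennreal (?k y powr q * \<bar>f y\<bar> powr p) \<partial>lebesgue"
  have kp: "?k y > 0" for y by (rule kern_pos[OF xn])
  have km[measurable]: "?k \<in> borel_measurable lebesgue" unfolding kern_def by measurable
  have coef: "Br powr (a * tt) * Dr powr (b * tt) > 0" using Bint D by simp
  have Eb: "ennreal \<bar>E_op \<alpha> \<beta> f (x, xn)\<bar> \<le> (\<integral>\<^sup>+ y. ennreal (?k y * \<bar>f y\<bar>) \<partial>lebesgue)"
    by (rule E_bound[OF xn])
  show ?thesis
  proof (cases ?A rule: ennreal_cases)
    case top
    have "ennreal (Br powr (a * tt) * Dr powr (b * tt)) \<noteq> 0" using Bint(2) D(2) by simp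
    then have "ennreal (Br powr (a * tt) * Dr powr (b * tt)) * top = top" by (rule ennreal_top_mult_left)
    then show ?thesis using top by simp
  next
    case (real Ar)
    show ?thesis
    proof (cases "Ar = 0")
      case True
      then have "?A = 0" using real by simp
      then have "AE y in lebesgue. ennreal (?k y powr q * \<bar>f y\<bar> powr p) = 0"
        by (subst (asm) nn_integral_0_iff_AE) auto
      then have "AE y in lebesgue. ennreal (?k y * \<bar>f y\<bar>) = 0"
      proof (rule eventually_mono)
        fix y assume "ennreal (?k y powr q * \<bar>f y\<bar> powr p) = 0"
        then have "?k y powr q * \<bar>f y\<bar> powr p \<le> 0" using ennreal_eq_0_iff by blast
        moreover have "?k y powr q > 0" using kp[of y] by simp
        ultimately have "\<bar>f y\<bar> powr p \<le> 0" by (simp add: mult_le_0_iff)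
        then have "f y = 0" by simp
        then show "ennreal (?k y * \<bar>f y\<bar>) = 0" by simp
      qed
      then have "(\<integral>\<^sup>+ y. ennreal (?k y * \<bar>f y\<bar>) \<partial>lebesgue) = 0"
        by (subst nn_integral_0_iff_AE) auto
      then have "E_op \<alpha> \<beta> f (x, xn) = 0" using Eb by simp
      then show ?thesis by simp
    next
      case False
      then have Ar: "Ar > 0" using real by simp
      let ?u = "\<lambda>y. ?k y powr q" and ?v = "\<lambda>y. \<bar>f y\<bar> powr p"
      have um[measurable]: "?u \<in> borel_measurable lebesgue" by measurable
      have vm[measurable]: "?v \<in> borel_measurable lebesgue" by measurable
      have y3: "(\<integral>\<^sup>+ y. ennreal ((?u y * ?v y) powr \<theta> * ?u y powr a * ?v y powr b) \<partial>lebesgue) \<le> ennreal (Ar powr \<theta> * Br powr a * Dr powr b)"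
        by (rule young3[OF w um vm _ _ _ Ar Bint _ D(2)]) (use real D(1) in auto)
      have eq: "(\<integral>\<^sup>+ y. ennreal ((?u y * ?v y) powr \<theta> * ?u y powr a * ?v y powr b) \<partial>lebesgue) = (\<integral>\<^sup>+ y. ennreal (?k y * \<bar>f y\<bar>) \<partial>lebesgue)"
        by (rule nn_integral_cong) (simp only: young_identity[OF kp q(2) p(2)])
      have "ennreal \<bar>E_op \<alpha> \<beta> f (x, xn)\<bar> \<le> ennreal (Ar powr \<theta> * Br powr a * Dr powr b)"
        using Eb y3[unfolded eq] by (rule order_trans)
      then have le: "\<bar>E_op \<alpha> \<beta> f (x, xn)\<bar> \<le> Ar powr \<theta> * Br powr a * Dr powr b"
        by (subst (asm) ennreal_le_iff) auto
      have "\<bar>E_op \<alpha> \<beta> f (x, xn)\<bar> powr tt \<le> (Ar powr \<theta> * Br powr a * Dr powr b) powr tt"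
        by (rule powr_mono2) (use le tt in auto)
      also have "\<dots> = Ar powr (\<theta> * tt) * Br powr (a * tt) * Dr powr (b * tt)"
        using Ar Bint D by (simp add: powr_mult powr_powr)
      also have "\<dots> = (Br powr (a * tt) * Dr powr (b * tt)) * Ar" using tt Ar by simp
      finally have "ennreal (\<bar>E_op \<alpha> \<beta> f (x, xn)\<bar> powr tt) \<le> ennreal ((Br powr (a * tt) * Dr powr (b * tt)) * Ar)"
        by (rule ennreal_leI)
      then show ?thesis using real coef Ar by (simp add: ennreal_mult)
    qed
  qed
qed

lemma part1_fin:
  fixes \<alpha> \<beta> p tt :: real
  assumes p1: "1 \<le> p" and ptt: "p \<le> tt"
    and hyp: "1 + 1/tt < (real DIM('a::euclidean_space) + 1 - \<alpha>) / real DIM('a) + 1/p"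
    and gpos: "real DIM('a) + 1 - \<alpha> > 0"
  shows "\<exists>C>0. \<forall>(f::'a \<Rightarrow> real) xn. f \<in> borel_measurable lebesgue \<and> Lp_norm (ereal p) lebesgue f < \<infinity> \<and> xn > 0 \<longrightarrow>
     Lp_norm (ereal tt) lebesgue (\<lambda>x'. E_op \<alpha> \<beta> f (x', xn))
       \<le> ennreal (C * xn powr (real DIM('a) * (1 + 1/tt - 1/p) - (real DIM('a) + 1 - \<alpha> - \<beta>))) * Lp_norm (ereal p) lebesgue f"
proof -
  define d where "d = real DIM('a)"
  define \<gamma> where "\<gamma> = d + 1 - \<alpha>"
  define c where "c = (real DIM('a) + 1 - \<alpha>) / 2"
  have c\<gamma>: "2 * c = \<gamma>" by (simp add: c_def \<gamma>_def d_def)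
  have d0: "d > 0" by (simp add: d_def)
  have g0: "\<gamma> > 0" using gpos by (simp add: \<gamma>_def d_def)
  have tt0: "tt > 0" using p1 ptt by simp
  have p0: "p > 0" using p1 by simp
  define \<theta> where "\<theta> = 1 / tt"
  define a where "a = 1 - 1/p"
  define b where "b = 1/p - 1/tt"
  define iq where "iq = 1 + 1/tt - 1/p"
  define q where "q = 1 / iq"
  have th0: "\<theta> > 0" using tt0 by (simp add: \<theta>_def)
  have a0: "a \<ge> 0" using p1 by (simp add: a_def)
  have b0: "b \<ge> 0" using p0 ptt by (simp add: b_def frac_le)
  have wsum: "\<theta> + a + b = 1" by (simp add: \<theta>_def a_def b_def)
  have iq_eq: "iq = \<theta> + a" by (simp add: iq_def \<theta>_def a_def)
  have iq0: "iq > 0" using th0 a0 iq_eq by simp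
  have q0: "q > 0" using iq0 by (simp add: q_def)
  have qa: "q * (\<theta> + a) = 1" using iq0 iq_eq by (simp add: q_def)
  have pb: "p * (\<theta> + b) = 1" using p0 by (simp add: \<theta>_def b_def)
  have tht: "\<theta> * tt = 1" using tt0 by (simp add: \<theta>_def)
  have "iq < \<gamma> / d" using hyp by (simp add: iq_def \<gamma>_def d_def)
  then have "d * iq < \<gamma>" using d0 by (simp add: field_simps)
  then have gqd: "2 * (c * q) > d" using iq0 c\<gamma> by (simp add: q_def field_simps)
  define B0 where "B0 = (\<integral>\<^sup>+ w. ennreal ((1 + (norm (w::'a))\<^sup>2) powr (-(c * q))) \<partial>lebesgue)"
  have B0fin: "B0 < \<infinity>" unfolding B0_def by (rule bump_finite) (use gqd in \<open>simp add: d_def\<close>)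
  define B0r where "B0r = enn2real B0 + 1"
  have BB0: "B0 \<le> ennreal B0r" using fin_le_ennreal[OF B0fin] by (simp add: B0r_def)
  have B0r0: "B0r > 0" by (simp add: B0r_def add_nonneg_pos)
  show ?thesis
  proof (intro exI[of _ "B0r powr (1/q)"] conjI allI impI)
    show "B0r powr (1/q) > 0" using B0r0 by simp
    fix f :: "'a \<Rightarrow> real" and xn :: real
    assume H: "f \<in> borel_measurable lebesgue \<and> Lp_norm (ereal p) lebesgue f < \<infinity> \<and> xn > 0"
    then have fm[measurable]: "f \<in> borel_measurable lebesgue" and Lfin: "Lp_norm (ereal p) lebesgue f < \<infinity>" and xn: "xn > 0" by auto
    let ?E = "\<lambda>x'. E_op \<alpha> \<beta> f (x', xn)"
    have Em[measurable]: "?E \<in> borel_measurable lebesgue" by (rule E_meas1[OF fm])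
    let ?D = "\<integral>\<^sup>+ y. ennreal (\<bar>f y\<bar> powr p) \<partial>lebesgue"
    have "?D \<noteq> \<infinity>"
    proof
      assume "?D = \<infinity>"
      then have "Lp_norm (ereal p) lebesgue f = \<infinity>" by (rule Lp_norm_infD[OF fm])
      then show False using Lfin by simp
    qed
    then obtain Dr where Dr: "?D = ennreal Dr" "Dr \<ge> 0" by (cases ?D rule: ennreal_cases) auto
    have Lf: "Lp_norm (ereal p) lebesgue f = ennreal (Dr powr (1/p))" by (rule Lp_norm_fin[OF fm Dr])
    define e where "e = d + q * (\<beta> - 2 * c)"
    define Br where "Br = xn powr e * B0r"
    have Br0: "Br > 0" using xn B0r0 by (simp add: Br_def)
    have Bint: "(\<integral>\<^sup>+ y. ennreal (kern \<beta> c xn (x - y) powr q) \<partial>lebesgue) \<le> ennreal Br" for x :: 'a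
    proof -
      have "(\<integral>\<^sup>+ y. ennreal (kern \<beta> c xn (x - y) powr q) \<partial>lebesgue) = ennreal (xn powr e) * B0"
        unfolding B0_def e_def d_def by (rule kern_int[OF xn q0])
      also have "\<dots> \<le> ennreal (xn powr e) * ennreal B0r" by (intro mult_left_mono BB0) simp
      also have "\<dots> = ennreal Br" using B0r0 by (simp add: Br_def ennreal_mult)
      finally show ?thesis .
    qed
    let ?RHS = "ennreal (B0r powr (1/q) * xn powr (real DIM('a) * (1 + 1/tt - 1/p) - (real DIM('a) + 1 - \<alpha> - \<beta>))) * Lp_norm (ereal p) lebesgue f"
    show "Lp_norm (ereal tt) lebesgue ?E \<le> ?RHS"
    proof (cases "Dr = 0")
      case True
      then have "AE y in lebesgue. f y = 0" using AE_zero_of_int0[of f lebesgue p] Dr by simp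
      moreover have "(\<lambda>y. ennreal (kern \<beta> c xn (x - y) * \<bar>f y\<bar>)) \<in> borel_measurable lebesgue" for x
        unfolding kern_def by measurable
      ultimately have "(\<integral>\<^sup>+ y. ennreal (kern \<beta> c xn (x - y) * \<bar>f y\<bar>) \<partial>lebesgue) = 0" for x
        by (subst nn_integral_0_iff_AE) (auto elim: eventually_mono)
      then have E0: "?E x = 0" for x using E_bound[OF xn, of \<alpha> \<beta> f x] by (simp add: c_def)
      have "Lp_norm (ereal tt) lebesgue ?E = ennreal (0 powr (1/tt))"
        by (rule Lp_norm_fin[OF Em]) (simp_all add: E0)
      then show ?thesis by simp
    next
      case False
      then have Dp: "Dr > 0" using Dr by simp
      define c0 where "c0 = Br powr (a * tt) * Dr powr (b * tt)"
      have c00: "c0 > 0" using Br0 Dp by (simp add: c0_def)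
      let ?F = "\<lambda>x y. ennreal (kern \<beta> c xn (x - y) powr q * \<bar>f y\<bar> powr p)"
      have Fm: "(\<lambda>(x, y). ?F x y) \<in> borel_measurable (lebesgue \<Otimes>\<^sub>M lebesgue)"
        unfolding kern_def by measurable
      have Fm': "(\<lambda>z. ?F (fst z) (snd z)) \<in> borel_measurable (lebesgue \<Otimes>\<^sub>M lebesgue)"
        using Fm by (simp add: case_prod_beta')
      have Am: "(\<lambda>x. \<integral>\<^sup>+ y. ?F x y \<partial>lebesgue) \<in> borel_measurable lebesgue"
        using sigma_finite_measure.borel_measurable_nn_integral_fst[OF sf_leb Fm'] by simp
      have pw: "ennreal (\<bar>?E x\<bar> powr tt) \<le> ennreal c0 * (\<integral>\<^sup>+ y. ?F x y \<partial>lebesgue)" for x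
        unfolding c0_def c_def
        by (rule young_pointwise[OF xn fm th0 a0 b0 wsum q0 qa p0 pb tt0 tht _ Br0 Dr(1) Dp]) (use Bint[of x] in \<open>simp add: c_def\<close>)
      have "(\<integral>\<^sup>+ x. ennreal (\<bar>?E x\<bar> powr tt) \<partial>lebesgue) \<le> (\<integral>\<^sup>+ x. ennreal c0 * (\<integral>\<^sup>+ y. ?F x y \<partial>lebesgue) \<partial>lebesgue)"
        by (rule nn_integral_mono) (rule pw)
      also have "\<dots> = ennreal c0 * (\<integral>\<^sup>+ x. (\<integral>\<^sup>+ y. ?F x y \<partial>lebesgue) \<partial>lebesgue)"
        by (rule nn_integral_cmult[OF Am])
      also have "(\<integral>\<^sup>+ x. (\<integral>\<^sup>+ y. ?F x y \<partial>lebesgue) \<partial>lebesgue) = (\<integral>\<^sup>+ y. (\<integral>\<^sup>+ x. ?F x y \<partial>lebesgue) \<partial>lebesgue)"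
        by (rule pair_sigma_finite.Fubini'[OF psf_leb Fm, symmetric])
      also have "\<dots> \<le> (\<integral>\<^sup>+ y. ennreal Br * ennreal (\<bar>f y\<bar> powr p) \<partial>lebesgue)"
      proof (rule nn_integral_mono)
        fix y :: 'a
        have "(\<integral>\<^sup>+ x. ?F x y \<partial>lebesgue) = (\<integral>\<^sup>+ x. ennreal (kern \<beta> c xn (y - x) powr q) * ennreal (\<bar>f y\<bar> powr p) \<partial>lebesgue)"
          by (rule nn_integral_cong) (simp add: kern_def norm_minus_commute ennreal_mult)
        also have "\<dots> = (\<integral>\<^sup>+ x. ennreal (kern \<beta> c xn (y - x) powr q) \<partial>lebesgue) * ennreal (\<bar>f y\<bar> powr p)"
          by (rule nn_integral_multc) (unfold kern_def, measurable)
        also have "\<dots> \<le> ennreal Br * ennreal (\<bar>f y\<bar> powr p)"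
          by (intro mult_right_mono Bint) simp
        finally show "(\<integral>\<^sup>+ x. ?F x y \<partial>lebesgue) \<le> ennreal Br * ennreal (\<bar>f y\<bar> powr p)" .
      qed
      also have "\<dots> = ennreal Br * ?D" by (rule nn_integral_cmult) measurable
      also have "\<dots> = ennreal (Br * Dr)" using Br0 Dr by (simp add: ennreal_mult)
      finally have Ile: "(\<integral>\<^sup>+ x. ennreal (\<bar>?E x\<bar> powr tt) \<partial>lebesgue) \<le> ennreal c0 * ennreal (Br * Dr)"
        by (simp add: mult_left_mono)
      also have "ennreal c0 * ennreal (Br * Dr) = ennreal (c0 * (Br * Dr))" using c00 Br0 Dp by (simp add: ennreal_mult)
      finally have Ile2: "(\<integral>\<^sup>+ x. ennreal (\<bar>?E x\<bar> powr tt) \<partial>lebesgue) \<le> ennreal (c0 * (Br * Dr))" .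
      then have "(\<integral>\<^sup>+ x. ennreal (\<bar>?E x\<bar> powr tt) \<partial>lebesgue) \<noteq> \<infinity>" by (auto simp: top_unique)
      then obtain Ir where Ir: "(\<integral>\<^sup>+ x. ennreal (\<bar>?E x\<bar> powr tt) \<partial>lebesgue) = ennreal Ir" "Ir \<ge> 0"
        by (cases "(\<integral>\<^sup>+ x. ennreal (\<bar>?E x\<bar> powr tt) \<partial>lebesgue)" rule: ennreal_cases) auto
      have Irle: "Ir \<le> c0 * (Br * Dr)" using Ile2 Ir c00 Br0 Dp by (simp add: ennreal_le_iff)
      have "Lp_norm (ereal tt) lebesgue ?E = ennreal (Ir powr (1/tt))" by (rule Lp_norm_fin[OF Em Ir])
      also have "\<dots> \<le> ennreal ((c0 * (Br * Dr)) powr (1/tt))"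
        by (intro ennreal_leI powr_mono2) (use Irle Ir tt0 in auto)
      also have "(c0 * (Br * Dr)) powr (1/tt) = Br powr (1/q) * Dr powr (1/p)"
      proof -
        have "(c0 * (Br * Dr)) powr (1/tt) = (Br powr (a * tt + 1) * Dr powr (b * tt + 1)) powr (1/tt)"
          unfolding c0_def using Br0 Dp by (simp add: powr_add mult_ac)
        also have "\<dots> = Br powr ((a * tt + 1) / tt) * Dr powr ((b * tt + 1) / tt)"
          using Br0 Dp by (simp add: powr_mult powr_powr)
        also have "(a * tt + 1) / tt = 1/q" using tt0 iq_eq iq0 by (simp add: q_def \<theta>_def field_simps)
        also have "(b * tt + 1) / tt = 1/p" using tt0 by (simp add: b_def field_simps)
        finally show ?thesis .
      qed
      also have "Br powr (1/q) = B0r powr (1/q) * xn powr (real DIM('a) * (1 + 1/tt - 1/p) - (real DIM('a) + 1 - \<alpha> - \<beta>))"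
      proof -
        have "Br powr (1/q) = (xn powr e) powr (1/q) * B0r powr (1/q)"
          unfolding Br_def using xn B0r0 by (simp add: powr_mult)
        also have "(xn powr e) powr (1/q) = xn powr (e / q)" by (simp add: powr_powr)
        also have "e / q = d * iq + \<beta> - \<gamma>" using q0 c\<gamma> iq0 by (simp add: e_def q_def field_simps)
        also have "d * iq + \<beta> - \<gamma> = real DIM('a) * (1 + 1/tt - 1/p) - (real DIM('a) + 1 - \<alpha> - \<beta>)"
          by (simp add: iq_def \<gamma>_def d_def)
        finally show ?thesis by (simp add: mult_ac)
      qed
      finally show ?thesis using B0r0 xn Dr by (simp add: Lf ennreal_mult mult_ac)
    qed
  qed
qed

lemma ennreal_fin_cases: "(X::ennreal) < \<infinity> \<Longrightarrow> \<exists>r\<ge>0. X = ennreal r"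
  by (cases X rule: ennreal_cases) auto

theorem lemma2p1:
  fixes n :: nat and \<alpha> \<beta> :: real and s t :: ereal
  assumes dim: "DIM('a::euclidean_space) = n - 1"
    and n3: "n \<ge> 3"
    and beta: "\<beta> \<ge> 0"
    and ab1: "0 < \<alpha> + \<beta>" and ab2: "\<alpha> + \<beta> < real n - \<beta>"
    and ab3: "(real n - \<alpha> - 2 * \<beta>) / (2 * real n) + (real n - \<alpha>) / (2 * (real n - 1)) < 1"
    and s1: "1 \<le> s" and st: "s \<le> t"
  shows
   "(1 + recip t < (real n - \<alpha>) / (real n - 1) + recip s \<longrightarrow>
      (\<exists>C>0. \<forall>(f :: 'a \<Rightarrow> real) xn.
         f \<in> borel_measurable lebesgue \<and> Lp_norm s lebesgue f < \<infinity> \<and> xn > 0 \<longrightarrow>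
         Lp_norm t lebesgue (\<lambda>x'. E_op \<alpha> \<beta> f (x', xn))
           \<le> ennreal (C * xn powr ((real n - 1) * (1 + recip t - recip s) - (real n - \<alpha> - \<beta>)))
              * Lp_norm s lebesgue f))
    \<and>
    (\<exists>C>0. \<forall>(f :: 'a \<Rightarrow> real) R x' xn.
         integrable lebesgue f \<and> R > 0 \<and> (\<forall>y. norm y \<ge> R \<longrightarrow> f y = 0) \<and> xn > 0 \<longrightarrow>
         \<bar>E_op \<alpha> \<beta> f (x', xn)\<bar>
           \<le> C * xn powr \<beta> / ((max (norm x' - R) 0)\<^sup>2 + xn\<^sup>2) powr ((real n - \<alpha>) / 2)
              * (\<integral>y. \<bar>f y\<bar> \<partial>lebesgue))
    \<and>
    (recip s > (\<alpha> - 1) / (real n - 1) \<longrightarrow>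
      (\<exists>C>0. \<forall>(f :: 'a \<Rightarrow> real) R xn.
         f \<in> borel_measurable lebesgue \<and> Lp_norm s lebesgue f < \<infinity> \<and> R > 0
         \<and> (\<forall>y. norm y < R \<longrightarrow> f y = 0) \<and> xn > 0 \<longrightarrow>
         Lp_norm \<infinity> (restrict_space lebesgue (ball 0 (R / 2))) (\<lambda>x'. E_op \<alpha> \<beta> f (x', xn))
           \<le> ennreal (C * xn powr \<beta> * R powr ((\<alpha> - 1) - (real n - 1) * recip s))
              * Lp_norm s lebesgue f))
    \<and>
    (recip s > (\<alpha> - 1) / (real n - 1) \<and> recip s > (\<alpha> + \<beta> - 1) / (real n - 1) \<longrightarrow>
      (\<exists>C>0. \<forall>(f :: 'a \<Rightarrow> real) R.
         f \<in> borel_measurable lebesgue \<and> Lp_norm s lebesgue f < \<infinity> \<and> R > 0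
         \<and> (\<forall>y. norm y < R \<longrightarrow> f y = 0) \<longrightarrow>
         Lp_norm \<infinity> (restrict_space lebesgue (half_ball (R / 2))) (E_op \<alpha> \<beta> f)
           \<le> ennreal (C * R powr (\<alpha> + \<beta> - 1 - (real n - 1) * recip s))
              * Lp_norm s lebesgue f))"
proof -
  have dn: "real DIM('a) = real n - 1" using dim n3 by (simp add: of_nat_diff)
  have dn1: "real DIM('a) + 1 = real n" using dn by simp
  have g: "real DIM('a) + 1 - \<alpha> > 0" using ab2 beta dn1 by linarith
  have P1: "1 + recip t < (real n - \<alpha>) / (real n - 1) + recip s \<longrightarrow>
      (\<exists>C>0. \<forall>(f :: 'a \<Rightarrow> real) xn.
         f \<in> borel_measurable lebesgue \<and> Lp_norm s lebesgue f < \<infinity> \<and> xn > 0 \<longrightarrow>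
         Lp_norm t lebesgue (\<lambda>x'. E_op \<alpha> \<beta> f (x', xn))
           \<le> ennreal (C * xn powr ((real n - 1) * (1 + recip t - recip s) - (real n - \<alpha> - \<beta>)))
              * Lp_norm s lebesgue f)"
  proof
    assume hyp: "1 + recip t < (real n - \<alpha>) / (real n - 1) + recip s"
    have hyp': "1 + recip t < (real DIM('a) + 1 - \<alpha>) / real DIM('a) + recip s" unfolding dn using hyp by simp
    show "\<exists>C>0. \<forall>(f :: 'a \<Rightarrow> real) xn.
         f \<in> borel_measurable lebesgue \<and> Lp_norm s lebesgue f < \<infinity> \<and> xn > 0 \<longrightarrow>
         Lp_norm t lebesgue (\<lambda>x'. E_op \<alpha> \<beta> f (x', xn))
           \<le> ennreal (C * xn powr ((real n - 1) * (1 + recip t - recip s) - (real n - \<alpha> - \<beta>)))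
              * Lp_norm s lebesgue f"
    proof (cases t)
      case PInf
      have h0: "1 < (real DIM('a) + 1 - \<alpha>) / real DIM('a) + recip s" using hyp' PInf by (simp add: recip_inf)
      obtain C where C: "C > 0" and CC: "\<And>(f::'a \<Rightarrow> real) xn x'. f \<in> borel_measurable lebesgue \<and> xn > 0 \<Longrightarrow>
          ennreal \<bar>E_op \<alpha> \<beta> f (x', xn)\<bar> \<le> ennreal (C * xn powr (real DIM('a) * (1 - recip s) - (real DIM('a) + 1 - \<alpha> - \<beta>))) * Lp_norm s lebesgue f"
        using part1_pt[OF s1 h0 g, of \<beta>] by blast
      have ex: "real DIM('a) * (1 - recip s) - (real DIM('a) + 1 - \<alpha> - \<beta>) = (real n - 1) * (1 + recip t - recip s) - (real n - \<alpha> - \<beta>)"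
        using PInf dn dn1 by (simp add: recip_inf)
      show ?thesis
      proof (intro exI[of _ C] conjI allI impI)
        show "C > 0" by (rule C)
        fix f :: "'a \<Rightarrow> real" and xn :: real
        assume H: "f \<in> borel_measurable lebesgue \<and> Lp_norm s lebesgue f < \<infinity> \<and> xn > 0"
        then have fm: "f \<in> borel_measurable lebesgue" and xn: "xn > 0" by auto
        obtain Lr where Lr: "Lr \<ge> 0" "Lp_norm s lebesgue f = ennreal Lr" using ennreal_fin_cases H by blast
        let ?z = "C * xn powr (real DIM('a) * (1 - recip s) - (real DIM('a) + 1 - \<alpha> - \<beta>)) * Lr"
        have "Lp_norm \<infinity> lebesgue (\<lambda>x'. E_op \<alpha> \<beta> f (x', xn)) \<le> ennreal ?z"
        proof (rule Linf_le[OF E_meas1[OF fm]])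
          fix x' :: 'a
          show "ennreal \<bar>E_op \<alpha> \<beta> f (x', xn)\<bar> \<le> ennreal ?z"
            using CC[of f xn x'] fm xn Lr C by (simp add: ennreal_mult)
        qed (use C Lr in simp)
        then show "Lp_norm t lebesgue (\<lambda>x'. E_op \<alpha> \<beta> f (x', xn))
           \<le> ennreal (C * xn powr ((real n - 1) * (1 + recip t - recip s) - (real n - \<alpha> - \<beta>))) * Lp_norm s lebesgue f"
          using PInf Lr C unfolding ex[symmetric] by (simp add: ennreal_mult)
      qed
    next
      case (real tt)
      have "s \<noteq> \<infinity>" using st real by auto
      moreover have "s \<noteq> -\<infinity>" using s1 by auto
      ultimately obtain p where sp: "s = ereal p" by (cases s) auto
      have p1: "1 \<le> p" using s1 sp by simp
      have ptt: "p \<le> tt" using st sp real by simp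
      have h0: "1 + 1/tt < (real DIM('a) + 1 - \<alpha>) / real DIM('a) + 1/p" using hyp' sp real by (simp add: recip_ereal)
      obtain C where C: "C > 0" and CC: "\<And>(f::'a \<Rightarrow> real) xn. f \<in> borel_measurable lebesgue \<and> Lp_norm (ereal p) lebesgue f < \<infinity> \<and> xn > 0 \<Longrightarrow>
          Lp_norm (ereal tt) lebesgue (\<lambda>x'. E_op \<alpha> \<beta> f (x', xn))
            \<le> ennreal (C * xn powr (real DIM('a) * (1 + 1/tt - 1/p) - (real DIM('a) + 1 - \<alpha> - \<beta>))) * Lp_norm (ereal p) lebesgue f"
        using part1_fin[OF p1 ptt h0 g, of \<beta>] by blast
      have ex: "real DIM('a) * (1 + 1/tt - 1/p) - (real DIM('a) + 1 - \<alpha> - \<beta>) = (real n - 1) * (1 + recip t - recip s) - (real n - \<alpha> - \<beta>)"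
        using real sp dn dn1 by (simp add: recip_ereal)
      show ?thesis
        using C CC unfolding sp real ex by blast
    next
      case MInf
      then show ?thesis using s1 st by auto
    qed
  qed
  have P2: "\<exists>C>0. \<forall>(f :: 'a \<Rightarrow> real) R x' xn.
         integrable lebesgue f \<and> R > 0 \<and> (\<forall>y. norm y \<ge> R \<longrightarrow> f y = 0) \<and> xn > 0 \<longrightarrow>
         \<bar>E_op \<alpha> \<beta> f (x', xn)\<bar>
           \<le> C * xn powr \<beta> / ((max (norm x' - R) 0)\<^sup>2 + xn\<^sup>2) powr ((real n - \<alpha>) / 2)
              * (\<integral>y. \<bar>f y\<bar> \<partial>lebesgue)"
  proof (intro exI[of _ 1] conjI allI impI)
    fix f :: "'a \<Rightarrow> real" and R xn :: real and x' :: 'a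
    assume H: "integrable lebesgue f \<and> R > 0 \<and> (\<forall>y. norm y \<ge> R \<longrightarrow> f y = 0) \<and> xn > 0"
    have "\<bar>E_op \<alpha> \<beta> f (x', xn)\<bar> \<le> xn powr \<beta> / ((max (norm x' - R) 0)\<^sup>2 + xn\<^sup>2) powr ((real DIM('a) + 1 - \<alpha>) / 2) * (\<integral>y. \<bar>f y\<bar> \<partial>lebesgue)"
      using H by (intro part2 g) auto
    then show "\<bar>E_op \<alpha> \<beta> f (x', xn)\<bar> \<le> 1 * xn powr \<beta> / ((max (norm x' - R) 0)\<^sup>2 + xn\<^sup>2) powr ((real n - \<alpha>) / 2) * (\<integral>y. \<bar>f y\<bar> \<partial>lebesgue)"
      by (simp add: dn1)
  qed simp
  have P3: "recip s > (\<alpha> - 1) / (real n - 1) \<Longrightarrow> \<exists>C>0. \<forall>(f::'a \<Rightarrow> real) R xn x'. f \<in> borel_measurable lebesgue \<and> R > 0 \<and> (\<forall>y. norm y < R \<longrightarrow> f y = 0) \<and> xn > 0 \<and> norm x' < R/2 \<longrightarrow>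
     ennreal \<bar>E_op \<alpha> \<beta> f (x', xn)\<bar> \<le> ennreal (C * xn powr \<beta> * R powr ((\<alpha> - 1) - (real n - 1) * recip s)) * Lp_norm s lebesgue f"
  proof -
    assume "recip s > (\<alpha> - 1) / (real n - 1)"
    then have "recip s > (\<alpha> - 1) / real DIM('a)" using dn by simp
    from part3[OF s1 this g, of \<beta>] show ?thesis by (simp only: dn)
  qed
  have P3a: "recip s > (\<alpha> - 1) / (real n - 1) \<longrightarrow>
      (\<exists>C>0. \<forall>(f :: 'a \<Rightarrow> real) R xn.
         f \<in> borel_measurable lebesgue \<and> Lp_norm s lebesgue f < \<infinity> \<and> R > 0
         \<and> (\<forall>y. norm y < R \<longrightarrow> f y = 0) \<and> xn > 0 \<longrightarrow>
         Lp_norm \<infinity> (restrict_space lebesgue (ball 0 (R / 2))) (\<lambda>x'. E_op \<alpha> \<beta> f (x', xn))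
           \<le> ennreal (C * xn powr \<beta> * R powr ((\<alpha> - 1) - (real n - 1) * recip s))
              * Lp_norm s lebesgue f)"
  proof
    assume hs: "recip s > (\<alpha> - 1) / (real n - 1)"
    obtain C where C: "C > 0" and CC: "\<And>(f::'a \<Rightarrow> real) R xn x'. f \<in> borel_measurable lebesgue \<and> R > 0 \<and> (\<forall>y. norm y < R \<longrightarrow> f y = 0) \<and> xn > 0 \<and> norm x' < R/2 \<Longrightarrow>
     ennreal \<bar>E_op \<alpha> \<beta> f (x', xn)\<bar> \<le> ennreal (C * xn powr \<beta> * R powr ((\<alpha> - 1) - (real n - 1) * recip s)) * Lp_norm s lebesgue f"
      using P3[OF hs] by blast
    show "\<exists>C>0. \<forall>(f :: 'a \<Rightarrow> real) R xn.
         f \<in> borel_measurable lebesgue \<and> Lp_norm s lebesgue f < \<infinity> \<and> R > 0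
         \<and> (\<forall>y. norm y < R \<longrightarrow> f y = 0) \<and> xn > 0 \<longrightarrow>
         Lp_norm \<infinity> (restrict_space lebesgue (ball 0 (R / 2))) (\<lambda>x'. E_op \<alpha> \<beta> f (x', xn))
           \<le> ennreal (C * xn powr \<beta> * R powr ((\<alpha> - 1) - (real n - 1) * recip s))
              * Lp_norm s lebesgue f"
    proof (intro exI[of _ C] conjI allI impI)
      show "C > 0" by (rule C)
      fix f :: "'a \<Rightarrow> real" and R xn :: real
      assume H: "f \<in> borel_measurable lebesgue \<and> Lp_norm s lebesgue f < \<infinity> \<and> R > 0 \<and> (\<forall>y. norm y < R \<longrightarrow> f y = 0) \<and> xn > 0"
      then have fm: "f \<in> borel_measurable lebesgue" and xn: "xn > 0" and R: "R > 0" by auto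
      obtain Lr where Lr: "Lr \<ge> 0" "Lp_norm s lebesgue f = ennreal Lr" using ennreal_fin_cases H by blast
      let ?z = "C * xn powr \<beta> * R powr ((\<alpha> - 1) - (real n - 1) * recip s) * Lr"
      have "Lp_norm \<infinity> (restrict_space lebesgue (ball 0 (R / 2))) (\<lambda>x'. E_op \<alpha> \<beta> f (x', xn)) \<le> ennreal ?z"
      proof (rule Linf_le[OF measurable_restrict_space1[OF E_meas1[OF fm]]])
        fix x' :: 'a
        assume "x' \<in> space (restrict_space lebesgue (ball 0 (R / 2)))"
        then have "norm x' < R/2" by simp
        then show "ennreal \<bar>E_op \<alpha> \<beta> f (x', xn)\<bar> \<le> ennreal ?z"
          using CC[of f R xn x'] H Lr C by (simp add: ennreal_mult)
      qed (use C Lr in simp)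
      then show "Lp_norm \<infinity> (restrict_space lebesgue (ball 0 (R / 2))) (\<lambda>x'. E_op \<alpha> \<beta> f (x', xn))
           \<le> ennreal (C * xn powr \<beta> * R powr ((\<alpha> - 1) - (real n - 1) * recip s)) * Lp_norm s lebesgue f"
        using Lr C by (simp add: ennreal_mult)
    qed
  qed
  have P3b: "recip s > (\<alpha> - 1) / (real n - 1) \<and> recip s > (\<alpha> + \<beta> - 1) / (real n - 1) \<longrightarrow>
      (\<exists>C>0. \<forall>(f :: 'a \<Rightarrow> real) R.
         f \<in> borel_measurable lebesgue \<and> Lp_norm s lebesgue f < \<infinity> \<and> R > 0
         \<and> (\<forall>y. norm y < R \<longrightarrow> f y = 0) \<longrightarrow>
         Lp_norm \<infinity> (restrict_space lebesgue (half_ball (R / 2))) (E_op \<alpha> \<beta> f)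
           \<le> ennreal (C * R powr (\<alpha> + \<beta> - 1 - (real n - 1) * recip s))
              * Lp_norm s lebesgue f)"
  proof
    assume hs: "recip s > (\<alpha> - 1) / (real n - 1) \<and> recip s > (\<alpha> + \<beta> - 1) / (real n - 1)"
    obtain C where C: "C > 0" and CC: "\<And>(f::'a \<Rightarrow> real) R xn x'. f \<in> borel_measurable lebesgue \<and> R > 0 \<and> (\<forall>y. norm y < R \<longrightarrow> f y = 0) \<and> xn > 0 \<and> norm x' < R/2 \<Longrightarrow>
     ennreal \<bar>E_op \<alpha> \<beta> f (x', xn)\<bar> \<le> ennreal (C * xn powr \<beta> * R powr ((\<alpha> - 1) - (real n - 1) * recip s)) * Lp_norm s lebesgue f"
      using P3 hs by blast
    show "\<exists>C>0. \<forall>(f :: 'a \<Rightarrow> real) R.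
         f \<in> borel_measurable lebesgue \<and> Lp_norm s lebesgue f < \<infinity> \<and> R > 0
         \<and> (\<forall>y. norm y < R \<longrightarrow> f y = 0) \<longrightarrow>
         Lp_norm \<infinity> (restrict_space lebesgue (half_ball (R / 2))) (E_op \<alpha> \<beta> f)
           \<le> ennreal (C * R powr (\<alpha> + \<beta> - 1 - (real n - 1) * recip s))
              * Lp_norm s lebesgue f"
    proof (intro exI[of _ C] conjI allI impI)
      show "C > 0" by (rule C)
      fix f :: "'a \<Rightarrow> real" and R :: real
      assume H: "f \<in> borel_measurable lebesgue \<and> Lp_norm s lebesgue f < \<infinity> \<and> R > 0 \<and> (\<forall>y. norm y < R \<longrightarrow> f y = 0)"
      then have fm: "f \<in> borel_measurable lebesgue" and R: "R > 0" by auto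
      obtain Lr where Lr: "Lr \<ge> 0" "Lp_norm s lebesgue f = ennreal Lr" using ennreal_fin_cases H by blast
      let ?z = "C * R powr (\<alpha> + \<beta> - 1 - (real n - 1) * recip s) * Lr"
      have "Lp_norm \<infinity> (restrict_space lebesgue (half_ball (R / 2))) (E_op \<alpha> \<beta> f) \<le> ennreal ?z"
      proof (rule Linf_le[OF measurable_restrict_space1[OF E_meas2[OF fm]]])
        fix z :: "'a \<times> real"
        assume "z \<in> space (restrict_space lebesgue (half_ball (R / 2)))"
        then obtain x' xn where z: "z = (x', xn)" and xn: "xn > 0" and hb: "sqrt ((norm x')\<^sup>2 + xn\<^sup>2) < R / 2"
          by (cases z) (auto simp: half_ball_def)
        have "norm x' \<le> sqrt ((norm x')\<^sup>2 + xn\<^sup>2)" by (rule real_le_rsqrt) simp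
        then have x': "norm x' < R/2" using hb by linarith
        have "xn \<le> sqrt ((norm x')\<^sup>2 + xn\<^sup>2)" by (rule real_le_rsqrt) simp
        then have xnR: "xn \<le> R" using hb R by linarith
        have b1: "ennreal \<bar>E_op \<alpha> \<beta> f (x', xn)\<bar> \<le> ennreal (C * xn powr \<beta> * R powr ((\<alpha> - 1) - (real n - 1) * recip s)) * Lp_norm s lebesgue f"
          using CC[of f R xn x'] H xn x' by blast
        have "C * xn powr \<beta> * R powr ((\<alpha> - 1) - (real n - 1) * recip s) \<le> C * R powr \<beta> * R powr ((\<alpha> - 1) - (real n - 1) * recip s)"
          using C R xn xnR beta by (intro mult_right_mono mult_left_mono powr_mono2) auto
        also have "\<dots> = C * R powr (\<alpha> + \<beta> - 1 - (real n - 1) * recip s)"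
          using R by (simp add: mult.assoc powr_add[symmetric] algebra_simps)
        finally have le: "C * xn powr \<beta> * R powr ((\<alpha> - 1) - (real n - 1) * recip s) \<le> C * R powr (\<alpha> + \<beta> - 1 - (real n - 1) * recip s)" .
        have "ennreal (C * xn powr \<beta> * R powr ((\<alpha> - 1) - (real n - 1) * recip s)) * Lp_norm s lebesgue f \<le> ennreal (C * R powr (\<alpha> + \<beta> - 1 - (real n - 1) * recip s)) * Lp_norm s lebesgue f"
          by (intro mult_right_mono ennreal_leI le) simp
        also have "\<dots> = ennreal ?z" using Lr C R by (simp add: ennreal_mult)
        finally show "ennreal \<bar>E_op \<alpha> \<beta> f z\<bar> \<le> ennreal ?z" using b1 z by simp
      qed (use C Lr in simp)
      then show "Lp_norm \<infinity> (restrict_space lebesgue (half_ball (R / 2))) (E_op \<alpha> \<beta> f)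
           \<le> ennreal (C * R powr (\<alpha> + \<beta> - 1 - (real n - 1) * recip s)) * Lp_norm s lebesgue f"
        using Lr C by (simp add: ennreal_mult)
    qed
  qed
  show ?thesis using P1 P2 P3a P3b by blast
qed


end
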